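(* Let $\lambda$ be a partition of $n$, and write $e_i=e_i(x_1,\dots,x_n)$. (1) If $\lambda=(u^a,(u-1)^c)$ (i.e. $a$ parts equal to $u$ followed by $c$ parts equal to $u-1$) and $g=a+c$, then $\mathcal{I}_\lambda$ is generated by $e_1,\dots,e_{g-1},x_1^{g},\dots,x_n^{g}$. (2) If $\lambda=(u^a,(u-1)^c,1)$ with $u\ge3$ and $g=a+c>1$, then $\mathcal{I}_\lambda$ is generated by $e_1,\dots,e_g$, $x_1^{g+1},\dots,x_n^{g+1}$, and $(x_ix_j)^g$ for all $1\le i<j\le n$. (3) If $\lambda=(u^a,(u-1)^c,1,1)$ with $u\ge4$ and $g=a+c+1>2$, then $\mathcal{I}_\lambda$ is generated by $e_1,\dots,e_g$, $x_1^{g+1},\dots,x_n^{g+1}$, $(x_i+x_j)(x_ix_j)^{g-1}$ for all $i\ne j$, and $(x_ix_jx_k)^{g-1}$ for all $1\le i<j<k\le n$.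
   Context: $k$ is a field of characteristic $0$ and $R=k[x_1,\dots,x_n]$. For a set $S$ of variables, $e_r(S)$ is the $r$-th elementary symmetric polynomial in the variables of $S$ ($e_0=1$, $e_r(S)=0$ if $r>|S|$), and for $1\le m\le n$, $e_r(m)=\{e_r(S): S\subseteq\{x_1,\dots,x_n\},\ |S|=m\}$. For a partition $\lambda$ of $n$ with conjugate $\lambda'_i=\#\{j:\lambda_j\ge i\}$ (and $\lambda'_i=0$ for $i>\lambda_1$), let $\delta_m(\lambda)=\lambda'_n+\cdots+\lambda'_{n-m+1}$ for $1\le m\le n$. The De Concini–Procesi ideal $\mathcal{I}_\lambda\subseteq R$ is the ideal generated by all elements of the sets $e_r(m)$ with $1\le m\le n$ and $m\ge r>m-\delta_m(\lambda)$. *)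

theory Defs
  imports "HOL-Library.Poly_Mapping"
begin

text \<open>Multivariate polynomials over k in variables x_i (i :: nat), represented as
  finitely supported maps from monomials (exponent vectors nat =>0 nat) to coefficients.\<close>
type_synonym 'k mpoly = "(nat \<Rightarrow>\<^sub>0 nat) \<Rightarrow>\<^sub>0 'k"

definition Var :: "nat \<Rightarrow> 'k::comm_ring_1 mpoly" where
  "Var i = Poly_Mapping.single (Poly_Mapping.single i 1) 1"

definition esym :: "nat \<Rightarrow> nat set \<Rightarrow> 'k::comm_ring_1 mpoly" where
  "esym r S = (\<Sum>T\<in>{T. T \<subseteq> S \<and> card T = r}. \<Prod>i\<in>T. Var i)"

definition ideal_gen :: "'a::comm_ring_1 set \<Rightarrow> 'a set" where
  "ideal_gen G = {p. \<exists>F c. finite F \<and> F \<subseteq> G \<and> p = (\<Sum>f\<in>F. c f * f)}"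

definition is_partition :: "nat \<Rightarrow> nat list \<Rightarrow> bool" where
  "is_partition n lam \<longleftrightarrow> sorted_wrt (\<ge>) lam \<and> (\<forall>x\<in>set lam. 0 < x) \<and> sum_list lam = n"

text \<open>conjugate partition: lam'_i = #{j. lam_j >= i} (indices i \<ge> 1)\<close>
definition conj_part :: "nat list \<Rightarrow> nat \<Rightarrow> nat" where
  "conj_part lam i = card {j. j < length lam \<and> i \<le> lam ! j}"

definition delta :: "nat \<Rightarrow> nat list \<Rightarrow> nat \<Rightarrow> nat" where
  "delta n lam m = (\<Sum>i\<in>{n - m + 1..n}. conj_part lam i)"

definition DP_gens :: "nat \<Rightarrow> nat list \<Rightarrow> 'k::comm_ring_1 mpoly set" where
  "DP_gens n lam = {esym r S | r S m. 1 \<le> m \<and> m \<le> n \<and> S \<subseteq> {1..n} \<and> card S = m \<and>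
        r \<le> m \<and> int m - int (delta n lam m) < int r}"

definition DP_ideal :: "nat \<Rightarrow> nat list \<Rightarrow> 'k::comm_ring_1 mpoly set" where
  "DP_ideal n lam = ideal_gen (DP_gens n lam)"

end

theory Submission
  imports Defs
begin

definition is_ideal :: "'a::comm_ring_1 set \<Rightarrow> bool" where
  "is_ideal K \<longleftrightarrow> 0 \<in> K \<and> (\<forall>x\<in>K. \<forall>y\<in>K. x + y \<in> K) \<and> (\<forall>r. \<forall>x\<in>K. r * x \<in> K)"

lemma is_idealD:
  assumes "is_ideal K"
  shows "0 \<in> K" "x \<in> K \<Longrightarrow> y \<in> K \<Longrightarrow> x + y \<in> K" "x \<in> K \<Longrightarrow> r * x \<in> K"
  using assms unfolding is_ideal_def by auto

lemma ideal_mult_right: "is_ideal K \<Longrightarrow> x \<in> K \<Longrightarrow> x * r \<in> K"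
  by (metis is_idealD(3) mult.commute)

lemma ideal_uminus: "is_ideal K \<Longrightarrow> x \<in> K \<Longrightarrow> - x \<in> K"
  by (metis is_idealD(3) mult_minus1)

lemma ideal_diff: "is_ideal K \<Longrightarrow> x \<in> K \<Longrightarrow> y \<in> K \<Longrightarrow> x - y \<in> K"
  by (metis diff_conv_add_uminus ideal_uminus is_idealD(2))

lemma ideal_sum: "is_ideal K \<Longrightarrow> (\<And>i. i \<in> A \<Longrightarrow> f i \<in> K) \<Longrightarrow> sum f A \<in> K"
proof (induction A rule: infinite_finite_induct)
  case (infinite A) then show ?case by (simp add: is_idealD(1))
next
  case empty then show ?case by (simp add: is_idealD(1))
next
  case (insert x F) then show ?case by (simp add: is_idealD(2))
qed

lemma ideal_sum_split:
  assumes "is_ideal K" "finite A" "B \<subseteq> A" "\<And>i. i \<in> A - B \<Longrightarrow> f i \<in> K" "sum f B \<in> K"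
  shows "sum f A \<in> K"
proof -
  have "sum f A = sum f B + sum f (A - B)"
    using assms(2,3) by (metis add.commute sum.subset_diff)
  moreover have "sum f (A - B) \<in> K" by (rule ideal_sum[OF assms(1)]) (use assms(4) in auto)
  ultimately show ?thesis using is_idealD(2)[OF assms(1) assms(5)] by simp
qed

lemma ideal_eq_cancel:
  assumes "is_ideal K" "x - y \<in> K" "y \<in> K" shows "x \<in> K"
  by (metis assms diff_add_cancel is_idealD(2))

lemma ideal_genE:
  assumes "p \<in> ideal_gen G"
  obtains F c where "finite F" "F \<subseteq> G" "p = (\<Sum>f\<in>F. c f * f)"
  using assms unfolding ideal_gen_def mem_Collect_eq by metis

lemma ideal_genI:
  assumes "finite F" "F \<subseteq> G" "p = (\<Sum>f\<in>F. c f * f)"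
  shows "p \<in> ideal_gen G"
  using assms unfolding ideal_gen_def mem_Collect_eq by metis

lemma ideal_gen_is_ideal: "is_ideal (ideal_gen G)"
proof -
  have "0 \<in> ideal_gen G"
    by (rule ideal_genI[of "{}"]) auto
  moreover have "x + y \<in> ideal_gen G" if hx: "x \<in> ideal_gen G" and hy: "y \<in> ideal_gen G" for x y
  proof -
    obtain F1 c1 where 1: "finite F1" "F1 \<subseteq> G" "x = (\<Sum>f\<in>F1. c1 f * f)"
      using ideal_genE[OF hx] by metis
    obtain F2 c2 where 2: "finite F2" "F2 \<subseteq> G" "y = (\<Sum>f\<in>F2. c2 f * f)"
      using ideal_genE[OF hy] by metis
    define c where "c f = (if f \<in> F1 then c1 f else 0) + (if f \<in> F2 then c2 f else 0)" for f
    have "(\<Sum>f\<in>F1 \<union> F2. c f * f) = (\<Sum>f\<in>F1 \<union> F2. (if f \<in> F1 then c1 f * f else 0)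
          + (if f \<in> F2 then c2 f * f else 0))"
      unfolding c_def by (rule sum.cong) (simp_all add: distrib_right)
    also have "\<dots> = (\<Sum>f\<in>F1 \<union> F2. (if f \<in> F1 then c1 f * f else 0))
          + (\<Sum>f\<in>F1 \<union> F2. (if f \<in> F2 then c2 f * f else 0))"
      by (rule sum.distrib)
    also have "(\<Sum>f\<in>F1 \<union> F2. (if f \<in> F1 then c1 f * f else 0)) = x"
      unfolding 1(3) by (rule sum.mono_neutral_cong_right) (use 1 2 in auto)
    also have "(\<Sum>f\<in>F1 \<union> F2. (if f \<in> F2 then c2 f * f else 0)) = y"
      unfolding 2(3) by (rule sum.mono_neutral_cong_right) (use 1 2 in auto)
    finally show ?thesis using 1 2 by (intro ideal_genI[of "F1 \<union> F2" _ _ c]) auto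
  qed
  moreover have "r * x \<in> ideal_gen G" if hx: "x \<in> ideal_gen G" for r x
  proof -
    obtain F1 c1 where 1: "finite F1" "F1 \<subseteq> G" "x = (\<Sum>f\<in>F1. c1 f * f)"
      using ideal_genE[OF hx] by metis
    have "r * x = (\<Sum>f\<in>F1. (r * c1 f) * f)" using 1 by (simp add: sum_distrib_left mult.assoc)
    then show ?thesis using 1 by (intro ideal_genI[of F1]) auto
  qed
  ultimately show ?thesis unfolding is_ideal_def by blast
qed

lemma ideal_gen_base: "g \<in> G \<Longrightarrow> g \<in> ideal_gen G"
  unfolding ideal_gen_def by (rule CollectI, rule exI[of _ "{g}"], rule exI[of _ "\<lambda>_. 1"], auto)

lemma ideal_gen_least:
  assumes "is_ideal K" "G \<subseteq> K" shows "ideal_gen G \<subseteq> K"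
proof
  fix p assume "p \<in> ideal_gen G"
  then obtain F c where "finite F" "F \<subseteq> G" "p = (\<Sum>f\<in>F. c f * f)"
    unfolding ideal_gen_def by blast
  then have "\<And>f. f \<in> F \<Longrightarrow> c f * f \<in> K" using assms is_idealD(3)[OF assms(1)] by blast
  then show "p \<in> K" unfolding \<open>p = _\<close> by (rule ideal_sum[OF assms(1)])
qed


section \<open>Elementary symmetric polynomials\<close>

lemma esym_0: "finite S \<Longrightarrow> esym 0 S = 1"
proof -
  assume "finite S"
  then have "T = {}" if "T \<subseteq> S" "card T = 0" for T
    using that by (meson card_0_eq finite_subset)
  then have "{T. T \<subseteq> S \<and> card T = 0} = {{}}"
    by auto
  then show ?thesis unfolding esym_def by simp
qed

lemma esym_gt: "finite S \<Longrightarrow> card S < r \<Longrightarrow> esym r S = 0"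
proof -
  assume "finite S" "card S < r"
  then have "\<not> (T \<subseteq> S \<and> card T = r)" for T
    using card_mono[of S T] by auto
  then have E: "{T. T \<subseteq> S \<and> card T = r} = {}"
    by auto
  show ?thesis unfolding esym_def E by simp
qed

lemma esym_empty: "0 < r \<Longrightarrow> esym r {} = 0"
  by (rule esym_gt) auto

lemma esym_insert:
  assumes "finite S" "j \<notin> S"
  shows "esym (Suc r) (insert j S) = esym (Suc r) S + Var j * esym r S"
proof -
  let ?A = "{T. T \<subseteq> S \<and> card T = Suc r}"
  let ?B = "{T. T \<subseteq> S \<and> card T = r}"
  have eq: "{T. T \<subseteq> insert j S \<and> card T = Suc r} = ?A \<union> insert j ` ?B"
  proof
    show "{T. T \<subseteq> insert j S \<and> card T = Suc r} \<subseteq> ?A \<union> insert j ` ?B"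
    proof
      fix T assume T: "T \<in> {T. T \<subseteq> insert j S \<and> card T = Suc r}"
      then have fT: "finite T" using assms(1) finite_subset by auto
      show "T \<in> ?A \<union> insert j ` ?B"
      proof (cases "j \<in> T")
        case True
        then have "T = insert j (T - {j})" by auto
        moreover have "T - {j} \<in> ?B" using T True fT by auto
        ultimately show ?thesis by blast
      next
        case False
        then show ?thesis using T by auto
      qed
    qed
  next
    show "?A \<union> insert j ` ?B \<subseteq> {T. T \<subseteq> insert j S \<and> card T = Suc r}"
    proof
      fix T assume "T \<in> ?A \<union> insert j ` ?B"
      then show "T \<in> {T. T \<subseteq> insert j S \<and> card T = Suc r}"
      proof
        assume "T \<in> ?A" then show ?thesis by auto
      next
        assume "T \<in> insert j ` ?B"
        then obtain U where U: "U \<subseteq> S" "card U = r" "T = insert j U" by auto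
        then have "finite U" "j \<notin> U" using assms finite_subset by auto
        then show ?thesis using U by auto
      qed
    qed
  qed
  have fin: "finite ?A" "finite (insert j ` ?B)" using assms(1) by auto
  have disj: "?A \<inter> insert j ` ?B = {}" using assms(2) by auto
  have inj: "inj_on (insert j) ?B"
  proof (rule inj_onI)
    fix U V assume "U \<in> ?B" "V \<in> ?B" "insert j U = insert j V"
    then have "j \<notin> U" "j \<notin> V" using assms(2) by auto
    then show "U = V" using \<open>insert j U = insert j V\<close> by (metis Diff_insert_absorb)
  qed
  have "esym (Suc r) (insert j S) = (\<Sum>T\<in>?A. \<Prod>i\<in>T. Var i) + (\<Sum>T\<in>insert j ` ?B. \<Prod>i\<in>T. Var i)"
    unfolding esym_def eq by (rule sum.union_disjoint[OF fin disj])
  also have "(\<Sum>T\<in>insert j ` ?B. \<Prod>i\<in>T. Var i) = (\<Sum>T\<in>?B. \<Prod>i\<in>insert j T. Var i)"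
    by (rule sum.reindex[OF inj, unfolded comp_def])
  also have "\<dots> = (\<Sum>T\<in>?B. Var j * (\<Prod>i\<in>T. Var i))"
  proof (rule sum.cong)
    fix T assume "T \<in> ?B"
    then have "finite T" "j \<notin> T" using assms finite_subset by auto
    then show "(\<Prod>i\<in>insert j T. Var i) = Var j * (\<Prod>i\<in>T. Var i)" by simp
  qed simp
  also have "\<dots> = Var j * esym r S" unfolding esym_def by (simp add: sum_distrib_left)
  finally show ?thesis unfolding esym_def by simp
qed

lemma esym_remove:
  assumes "finite S" "j \<in> S"
  shows "esym r (S - {j}) = (\<Sum>t\<le>r. (- Var j) ^ t * esym (r - t) S :: 'a::comm_ring_1 mpoly)"
proof (induction r)
  case 0
  have "esym 0 (S - {j}) = (1 :: 'a mpoly)" "esym 0 S = (1 :: 'a mpoly)"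
    using assms by (simp_all add: esym_0)
  then show ?case by simp
next
  case (Suc r)
  have S: "S = insert j (S - {j})" using assms by auto
  have "esym (Suc r) S = esym (Suc r) (S - {j}) + Var j * (esym r (S - {j}) :: 'a mpoly)"
    by (subst S, rule esym_insert) (use assms in auto)
  then have "esym (Suc r) (S - {j}) = esym (Suc r) S - Var j * (esym r (S - {j}) :: 'a mpoly)"
    unfolding eq_diff_eq by (rule sym)
  also have "\<dots> = esym (Suc r) S + (\<Sum>t\<le>r. (- Var j) ^ Suc t * esym (r - t) S)"
  proof -
    have A: "(\<Sum>t\<le>r. (- Var j) ^ Suc t * esym (r - t) S) = - (Var j * (\<Sum>t\<le>r. (- Var j) ^ t * esym (r - t) S) :: 'a mpoly)"
      by (simp add: sum_distrib_left sum_negf mult.assoc)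
    have B: "Var j * esym r (S - {j}) = Var j * (\<Sum>t\<le>r. (- Var j) ^ t * esym (r - t) S :: 'a mpoly)"
      using Suc.IH by simp
    show ?thesis by (simp only: diff_conv_add_uminus A B)
  qed
  also have "\<dots> = (\<Sum>t\<le>Suc r. (- Var j) ^ t * esym (Suc r - t) S)"
    by (subst sum.atMost_Suc_shift) simp
  finally show ?case .
qed

lemma esym_newton:
  assumes "finite S"
  shows "(\<Sum>j\<in>S. Var j * esym r (S - {j})) = of_nat (Suc r) * (esym (Suc r) S :: 'a::comm_ring_1 mpoly)"
  using assms
proof (induction S arbitrary: r rule: finite_induct)
  case empty
  then show ?case by (simp add: esym_empty)
next
  case (insert a S)
  have eqs: "insert a S - {j} = insert a (S - {j})" if "j \<in> S" for j
    using that insert by auto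
  have "(\<Sum>j\<in>insert a S. Var j * esym r (insert a S - {j}))
      = Var a * esym r S + (\<Sum>j\<in>S. Var j * esym r (insert a (S - {j})) :: 'a mpoly)"
    using insert by (simp add: eqs)
  also have "\<dots> = of_nat (Suc r) * esym (Suc r) (insert a S)"
  proof (cases r)
    case 0
    have "(\<Sum>j\<in>S. Var j * esym r (insert a (S - {j}))) = (\<Sum>j\<in>S. Var j * esym r (S - {j}) :: 'a mpoly)"
      using insert.hyps 0 by (intro sum.cong) (simp_all add: esym_0)
    also have "\<dots> = esym (Suc 0) S" using insert.IH[of 0] 0 by simp
    finally have h1: "(\<Sum>j\<in>S. Var j * esym r (insert a (S - {j}))) = (esym (Suc 0) S :: 'a mpoly)" .
    have h2: "esym (Suc 0) (insert a S) = esym (Suc 0) S + Var a * (esym 0 S :: 'a mpoly)"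
      using insert.hyps by (rule esym_insert)
    have "Var a * esym r S + (\<Sum>j\<in>S. Var j * esym r (insert a (S - {j}))) = esym (Suc 0) S + Var a * (esym 0 S :: 'a mpoly)"
      unfolding h1 using 0 by (simp add: add.commute)
    then show ?thesis using h2 0 by simp
  next
    case (Suc r')
    have "(\<Sum>j\<in>S. Var j * esym r (insert a (S - {j})))
        = (\<Sum>j\<in>S. Var j * esym r (S - {j}) + Var a * (Var j * esym r' (S - {j})) :: 'a mpoly)"
      unfolding Suc using insert.hyps
      by (intro sum.cong) (simp_all add: esym_insert distrib_left mult.left_commute)
    also have "\<dots> = (\<Sum>j\<in>S. Var j * esym r (S - {j})) + Var a * (\<Sum>j\<in>S. Var j * esym r' (S - {j}) :: 'a mpoly)"
      by (simp add: sum.distrib sum_distrib_left)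
    also have "\<dots> = of_nat (Suc r) * esym (Suc r) S + Var a * (of_nat r * esym r S :: 'a mpoly)"
      using insert.IH Suc by simp
    finally have 1: "(\<Sum>j\<in>S. Var j * esym r (insert a (S - {j}))) =
       of_nat (Suc r) * esym (Suc r) S + Var a * (of_nat r * esym r S :: 'a mpoly)" .
    have 2: "esym (Suc r) (insert a S) = esym (Suc r) S + Var a * (esym r S :: 'a mpoly)"
      using insert.hyps by (rule esym_insert)
    show ?thesis unfolding 1 2 by (simp add: algebra_simps)
  qed
  finally show ?case .
qed


section \<open>Complete homogeneous symmetric polynomials in a list of variables\<close>

fun hsym :: "nat \<Rightarrow> nat list \<Rightarrow> 'a::comm_ring_1 mpoly" where
  "hsym r [] = (if r = 0 then 1 else 0)"
| "hsym r (j # js) = (\<Sum>t\<le>r. Var j ^ t * hsym (r - t) js)"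

lemma hsym_single: "hsym r [j] = (Var j ^ r :: 'a::comm_ring_1 mpoly)"
proof -
  have "hsym r [j] = (\<Sum>t\<le>r. Var j ^ t * (if r - t = 0 then 1 else 0) :: 'a mpoly)" by simp
  also have "\<dots> = (\<Sum>t\<in>{r}. Var j ^ t * (if r - t = 0 then 1 else 0))"
    by (rule sum.mono_neutral_right) auto
  finally show ?thesis by simp
qed

lemma esym_hsym:
  assumes K: "is_ideal K" and F: "finite F" and E: "\<And>s. 1 \<le> s \<Longrightarrow> esym s F \<in> K"
  shows "distinct js \<Longrightarrow> set js \<subseteq> F \<Longrightarrow>
    esym r (F - set js) - (-1) ^ r * hsym r js \<in> (K :: 'a::comm_ring_1 mpoly set)"
proof (induction js arbitrary: r)
  case Nil
  show ?case
  proof (cases r)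
    case 0 then show ?thesis using F is_idealD(1)[OF K] by (simp add: esym_0)
  next
    case (Suc r') then show ?thesis using E[of r] by simp
  qed
next
  case (Cons j js)
  let ?S = "F - set js"
  have jS: "j \<in> ?S" using Cons.prems by auto
  have fS: "finite ?S" using F by auto
  have eqF: "F - set (j # js) = ?S - {j}" by auto
  have e1: "esym r (?S - {j}) = (\<Sum>t\<le>r. (- Var j) ^ t * esym (r - t) ?S :: 'a mpoly)"
    by (rule esym_remove[OF fS jS])
  have e2: "(-1) ^ r * hsym r (j # js) = (\<Sum>t\<le>r. (- Var j) ^ t * ((-1) ^ (r - t) * hsym (r - t) js) :: 'a mpoly)"
    unfolding hsym.simps sum_distrib_left
  proof (rule sum.cong)
    fix t assume "t \<in> {..r}"
    then have "r = t + (r - t)" by auto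
    then have "(-1::'a mpoly) ^ r = (-1) ^ t * (-1) ^ (r - t)" by (metis power_add)
    then show "(-1) ^ r * (Var j ^ t * hsym (r - t) js) = (- Var j) ^ t * ((-1) ^ (r - t) * hsym (r - t) js :: 'a mpoly)"
      by (simp add: power_minus[of "Var j"] algebra_simps)
  qed simp
  have "esym r (F - set (j # js)) - (-1) ^ r * hsym r (j # js)
      = (\<Sum>t\<le>r. (- Var j) ^ t * (esym (r - t) ?S - (-1) ^ (r - t) * hsym (r - t) js) :: 'a mpoly)"
    unfolding eqF e1 e2 by (simp add: sum_subtractf right_diff_distrib)
  also have "\<dots> \<in> K"
    using Cons by (intro ideal_sum[OF K] is_idealD(3)[OF K]) auto
  finally show ?case .
qed

lemma ideal_of_nat_cancel:
  assumes K: "is_ideal K" and p: "of_nat (Suc r) * p \<in> (K :: 'k::field_char_0 mpoly set)"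
  shows "p \<in> K"
proof -
  have "Poly_Mapping.single 0 (inverse (of_nat (Suc r))) * (of_nat (Suc r) * p) = p"
  proof -
    have "Poly_Mapping.single 0 (inverse (of_nat (Suc r))) * (of_nat (Suc r) :: 'k mpoly)
        = Poly_Mapping.single 0 (inverse (of_nat (Suc r)) * of_nat (Suc r))"
      by (simp only: single_of_nat[symmetric] mult_single add_0)
    also have "\<dots> = 1" by (simp del: of_nat_Suc)
    finally show ?thesis by (simp add: mult.assoc[symmetric])
  qed
  then show ?thesis using is_idealD(3)[OF K p] by metis
qed

lemma esym_all_in:
  assumes K: "is_ideal K" and F: "finite F"
    and low: "\<And>s. 1 \<le> s \<Longrightarrow> s \<le> G0 \<Longrightarrow> esym s F \<in> K"
    and pw: "\<And>j. j \<in> F \<Longrightarrow> Var j ^ Suc G0 \<in> K"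
  shows "1 \<le> s \<Longrightarrow> esym s F \<in> (K :: 'k::field_char_0 mpoly set)"
proof (induction s rule: less_induct)
  case (less s)
  show ?case
  proof (cases "s \<le> G0")
    case True then show ?thesis using low less.prems by auto
  next
    case False
    then obtain r where s: "s = Suc r" and r: "G0 \<le> r" by (cases s) auto
    have "of_nat (Suc r) * esym (Suc r) F = (\<Sum>j\<in>F. Var j * esym r (F - {j}) :: 'k mpoly)"
      by (rule esym_newton[OF F, symmetric])
    also have "\<dots> = (\<Sum>j\<in>F. \<Sum>t\<le>r. Var j * ((- Var j) ^ t * esym (r - t) F))"
      by (rule sum.cong) (simp_all add: esym_remove[OF F] sum_distrib_left)
    also have "\<dots> \<in> K"
    proof (rule ideal_sum[OF K], rule ideal_sum[OF K])
      fix j t assume j: "j \<in> F" and t: "t \<in> {..r}"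
      show "Var j * ((- Var j) ^ t * esym (r - t) F) \<in> K"
      proof (cases "t = r")
        case True
        have "Var j * ((- Var j) ^ t * esym (r - t) F) = (-1) ^ r * (Var j ^ Suc G0 * Var j ^ (r - G0) :: 'k mpoly)"
        proof -
          have "Suc r = Suc G0 + (r - G0)" using r by simp
          then have E: "Var j ^ Suc G0 * Var j ^ (r - G0) = (Var j ^ Suc r :: 'k mpoly)" by (metis power_add)
          have A: "Var j * ((- Var j) ^ t * esym (r - t) F) = (-1) ^ r * (Var j ^ Suc r :: 'k mpoly)"
            using True F by (simp add: esym_0 power_minus[of "Var j"] algebra_simps)
          show ?thesis unfolding E by (rule A)
        qed
        also have "\<dots> \<in> K" using pw[OF j] K by (intro is_idealD(3)[OF K] ideal_mult_right) auto
        finally show ?thesis .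
      next
        case False
        then have "esym (r - t) F \<in> K" using t s by (intro less.IH) auto
        then show ?thesis using K by (intro is_idealD(3)[OF K]) 
      qed
    qed
    finally show ?thesis using s ideal_of_nat_cancel[OF K] by blast
  qed
qed


section \<open>Conjugate partitions and the shape of the generators\<close>

lemma conj_part_filter: "conj_part lam i = length (filter (\<lambda>x. i \<le> x) lam)"
  by (simp add: conj_part_def length_filter_conv_card)

lemma sum_indicator_le:
  assumes "x \<le> N" shows "(\<Sum>i\<in>{1..N}. (if i \<le> x then 1 else 0 :: nat)) = x"
proof -
  have "(\<Sum>i\<in>{1..N}. (if i \<le> x then 1 else 0 :: nat)) = card ({1..N} \<inter> {i. i \<le> x})"
    by (simp add: sum.If_cases)
  also have "{1..N} \<inter> {i. i \<le> x} = {1..x}" using assms by auto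
  finally show ?thesis by simp
qed

lemma sum_conj:
  "(\<forall>x\<in>set lam. x \<le> N) \<Longrightarrow> (\<Sum>i\<in>{1..N}. conj_part lam i) = sum_list lam"
proof (induction lam)
  case Nil
  then show ?case by (simp add: conj_part_filter)
next
  case (Cons x xs)
  have "(\<Sum>i\<in>{1..N}. conj_part (x # xs) i) = (\<Sum>i\<in>{1..N}. (if i \<le> x then 1 else 0) + conj_part xs i)"
    by (rule sum.cong) (simp_all add: conj_part_filter)
  also have "\<dots> = (\<Sum>i\<in>{1..N}. (if i \<le> x then 1 else 0)) + (\<Sum>i\<in>{1..N}. conj_part xs i)"
    by (rule sum.distrib)
  also have "(\<Sum>i\<in>{1..N}. (if i \<le> x then 1 else 0)) = x"
    using Cons.prems by (intro sum_indicator_le) auto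
  also have "(\<Sum>i\<in>{1..N}. conj_part xs i) = sum_list xs"
    using Cons by auto
  finally show ?case by simp
qed

lemma partition_parts_le: "is_partition n lam \<Longrightarrow> x \<in> set lam \<Longrightarrow> x \<le> n"
  unfolding is_partition_def using member_le_sum_list by fastforce

lemma delta_eq:
  assumes part: "is_partition n lam" and k: "k \<le> n"
  shows "delta n lam (n - k) + (\<Sum>i\<in>{1..k}. conj_part lam i) = n"
proof -
  have "(\<Sum>i\<in>{1..n}. conj_part lam i) = n"
    using sum_conj[of lam n] part partition_parts_le[OF part] unfolding is_partition_def by auto
  moreover have "{1..n} = {1..k} \<union> {k+1..n}" using k by auto
  moreover have "(\<Sum>i\<in>{1..k} \<union> {k+1..n}. conj_part lam i) = (\<Sum>i\<in>{1..k}. conj_part lam i) + (\<Sum>i\<in>{k+1..n}. conj_part lam i)"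
    by (rule sum.union_disjoint) auto
  moreover have "n - (n - k) + 1 = k + 1" using k by simp
  ultimately show ?thesis unfolding delta_def by simp
qed

lemma DP_mem:
  assumes part: "is_partition n lam" and S: "S \<subseteq> {1..n}" and r: "1 \<le> r"
    and cond: "(\<Sum>i\<in>{1..n - card S}. conj_part lam i) < r + (n - card S)"
  shows "esym r S \<in> (DP_ideal n lam :: 'k::comm_ring_1 mpoly set)"
proof -
  have fS: "finite S" using finite_subset[OF S] by simp
  have mn: "card S \<le> n" using card_mono[OF _ S] by simp
  show ?thesis
  proof (cases "card S < r")
    case True
    have "esym r S = (0 :: 'k mpoly)" by (rule esym_gt[OF fS True])
    then show ?thesis unfolding DP_ideal_def using is_idealD(1)[OF ideal_gen_is_ideal] by simp
  next
    case False
    define k where "k = n - card S"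
    have mk: "card S = n - k" using mn k_def by simp
    have kn: "k \<le> n" by (simp add: k_def)
    have d: "delta n lam (card S) + (\<Sum>i\<in>{1..k}. conj_part lam i) = n"
      unfolding mk by (rule delta_eq[OF part kn])
    have c2: "(\<Sum>i\<in>{1..k}. conj_part lam i) < r + k" using cond k_def by simp
    have i1: "int k = int n - int (card S)" using mn k_def by simp
    have i2: "int (delta n lam (card S)) + int (\<Sum>i\<in>{1..k}. conj_part lam i) = int n"
      using d by (metis of_nat_add)
    have "int (card S) - int (delta n lam (card S)) < int r"
      using c2 i1 i2 by linarith
    moreover have "1 \<le> card S" "r \<le> card S" using False r by auto
    ultimately have "esym r S \<in> (DP_gens n lam :: 'k mpoly set)"
      unfolding DP_gens_def using S mn by (intro CollectI exI conjI[OF refl]) (auto simp only:)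
    then show ?thesis unfolding DP_ideal_def by (rule ideal_gen_base)
  qed
qed

lemma DP_gensE:
  assumes part: "is_partition n lam" and p: "p \<in> (DP_gens n lam :: 'k::comm_ring_1 mpoly set)"
  obtains r S where "p = esym r S" "S \<subseteq> {1..n}" "r \<le> card S"
    "(\<Sum>i\<in>{1..n - card S}. conj_part lam i) < r + (n - card S)"
proof -
  obtain r S m where rs: "p = esym r S" "1 \<le> m" "m \<le> n" "S \<subseteq> {1..n}" "card S = m" "r \<le> m"
    "int m - int (delta n lam m) < int r"
    using p unfolding DP_gens_def by blast
  define k where "k = n - m"
  have kn: "k \<le> n" by (simp add: k_def)
  have mk: "m = n - k" using rs k_def by simp
  have d: "delta n lam m + (\<Sum>i\<in>{1..k}. conj_part lam i) = n"
    unfolding mk by (rule delta_eq[OF part kn])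
  have kk: "n - card S = k" using rs(5) k_def by simp
  have "int k = int n - int m" using rs(3) k_def by simp
  then have "(\<Sum>i\<in>{1..k}. conj_part lam i) < r + k"
    using d rs(7) by linarith
  then have "(\<Sum>i\<in>{1..n - card S}. conj_part lam i) < r + (n - card S)"
    unfolding kk .
  then show ?thesis using that rs by blast
qed

lemma conj_part_shape:
  "conj_part (replicate a u @ replicate c (u - 1) @ replicate e 1) i
    = (if i \<le> u then a else 0) + (if i \<le> u - 1 then c else 0) + (if i \<le> 1 then e else 0)"
  by (simp add: conj_part_filter filter_replicate)

lemma Sk_small:
  assumes "k \<le> u - 1"
  shows "(\<Sum>i\<in>{1..k}. conj_part (replicate a u @ replicate c (u - 1) @ replicate e 1) i)
     = k * (a + c) + (if k = 0 then 0 else e)"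
proof -
  have "(\<Sum>i\<in>{1..k}. conj_part (replicate a u @ replicate c (u - 1) @ replicate e 1) i)
      = (\<Sum>i\<in>{1..k}. (a + c) + (if i \<le> 1 then e else 0))"
    by (rule sum.cong[OF refl], subst conj_part_shape) (use assms in auto)
  also have "\<dots> = k * (a + c) + (\<Sum>i\<in>{1..k}. (if i \<le> 1 then e else 0))"
    by (simp add: sum.distrib)
  also have "(\<Sum>i\<in>{1..k}. (if i \<le> 1 then e else 0)) = (if k = 0 then 0 else e)"
  proof (cases k)
    case 0 then show ?thesis by simp
  next
    case (Suc k')
    then have "{1..k} = insert 1 {2..k}" by auto
    then show ?thesis using Suc by simp
  qed
  finally show ?thesis .
qed

lemma Sk_large:
  assumes part: "is_partition n (replicate a u @ replicate c (u - 1) @ replicate e 1)"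
    and u: "1 \<le> u" "u \<le> k"
  shows "n \<le> (\<Sum>i\<in>{1..k}. conj_part (replicate a u @ replicate c (u - 1) @ replicate e 1) i)"
proof -
  let ?l = "replicate a u @ replicate c (u - 1) @ replicate e 1"
  have "(\<Sum>i\<in>{1..u}. conj_part ?l i) = sum_list ?l"
    by (rule sum_conj) (use u in auto)
  also have "\<dots> = n" using part unfolding is_partition_def by simp
  finally have "(\<Sum>i\<in>{1..u}. conj_part ?l i) = n" .
  moreover have "(\<Sum>i\<in>{1..u}. conj_part ?l i) \<le> (\<Sum>i\<in>{1..k}. conj_part ?l i)"
    by (rule sum_mono2) (use u in auto)
  ultimately show ?thesis by simp
qed


section \<open>Membership of complete homogeneous polynomials\<close>

lemma hsym_0: "hsym 0 js = (1 :: 'a::comm_ring_1 mpoly)"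
  by (induction js) auto

lemma pow_in:
  assumes K: "is_ideal K" and p: "Var j ^ g \<in> (K :: 'a::comm_ring_1 mpoly set)" and t: "g \<le> t"
  shows "Var j ^ t \<in> K"
proof -
  have "Var j ^ t = Var j ^ g * (Var j ^ (t - g) :: 'a mpoly)"
    using t by (simp add: power_add[symmetric])
  then show ?thesis using ideal_mult_right[OF K p] by simp
qed

lemma hsym_case1:
  assumes K: "is_ideal K" and pw: "\<And>j. j \<in> V \<Longrightarrow> Var j ^ g \<in> (K :: 'a::comm_ring_1 mpoly set)"
  shows "set js \<subseteq> V \<Longrightarrow> length js * (g - 1) < r \<Longrightarrow> hsym r js \<in> K"
proof (induction js arbitrary: r)
  case Nil
  then show ?case using is_idealD(1)[OF K] by simp
next
  case (Cons j js)
  show ?case unfolding hsym.simps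
  proof (rule ideal_sum[OF K])
    fix t assume t: "t \<in> {..r}"
    show "Var j ^ t * hsym (r - t) js \<in> K"
    proof (cases "g \<le> t")
      case True
      then show ?thesis using pow_in[OF K pw] Cons.prems ideal_mult_right[OF K] by auto
    next
      case False
      have e: "length (j # js) * (g - 1) = length js * (g - 1) + (g - 1)" by simp
      have "length js * (g - 1) < r - t" using Cons.prems(2) False t e by linarith
      then have "hsym (r - t) js \<in> K" using Cons.IH Cons.prems by auto
      then show ?thesis using is_idealD(3)[OF K] by blast
    qed
  qed
qed

lemma sq_in_case2:
  assumes K: "is_ideal K" and g: "1 \<le> g"
    and pw: "\<And>j. j \<in> V \<Longrightarrow> Var j ^ Suc g \<in> (K :: 'a::comm_ring_1 mpoly set)"
    and pr: "\<And>i j. i \<in> V \<Longrightarrow> j \<in> V \<Longrightarrow> i \<noteq> j \<Longrightarrow> (Var i * Var j) ^ g \<in> K"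
    and ij: "i \<in> V" "j \<in> V"
  shows "Var i ^ g * Var j ^ g \<in> K"
proof (cases "i = j")
  case True
  have "Var i ^ (g + g) \<in> K" using pow_in[OF K pw[OF ij(1)]] g by simp
  then show ?thesis using True by (simp add: power_add)
next
  case False
  then show ?thesis using pr[OF ij False] by (simp add: power_mult_distrib)
qed

lemma hsym_case2a:
  assumes K: "is_ideal K" and g: "1 \<le> g"
    and pw: "\<And>j. j \<in> V \<Longrightarrow> Var j ^ Suc g \<in> (K :: 'a::comm_ring_1 mpoly set)"
    and pr: "\<And>i j. i \<in> V \<Longrightarrow> j \<in> V \<Longrightarrow> i \<noteq> j \<Longrightarrow> (Var i * Var j) ^ g \<in> K"
    and y: "y \<in> V"
  shows "set js \<subseteq> V \<Longrightarrow> length js * (g - 1) < d \<Longrightarrow> Var y ^ g * hsym d js \<in> K"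
proof (induction js arbitrary: d)
  case Nil
  then show ?case using is_idealD(1)[OF K] by simp
next
  case (Cons j js)
  have "Var y ^ g * hsym d (j # js) = (\<Sum>t\<le>d. Var y ^ g * (Var j ^ t * hsym (d - t) js))"
    by (simp add: sum_distrib_left)
  also have "\<dots> \<in> K"
  proof (rule ideal_sum[OF K])
    fix t assume t: "t \<in> {..d}"
    show "Var y ^ g * (Var j ^ t * hsym (d - t) js) \<in> K"
    proof (cases "g \<le> t")
      case True
      have jV: "j \<in> V" using Cons.prems by auto
      have "Var y ^ g * (Var j ^ t * hsym (d - t) js) = (Var y ^ g * Var j ^ g) * (Var j ^ (t - g) * hsym (d - t) js :: 'a mpoly)"
      proof -
        have E: "Var j ^ t = Var j ^ g * (Var j ^ (t - g) :: 'a mpoly)" using True by (simp add: power_add[symmetric])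
        show ?thesis unfolding E by (simp add: algebra_simps)
      qed
      then show ?thesis using sq_in_case2[OF K g pw pr y jV] ideal_mult_right[OF K] by simp
    next
      case False
      have e: "length (j # js) * (g - 1) = length js * (g - 1) + (g - 1)" by simp
      have "length js * (g - 1) < d - t" using Cons.prems(2) False t e by linarith
      then have "Var y ^ g * hsym (d - t) js \<in> K" using Cons.IH Cons.prems by auto
      then have "Var j ^ t * (Var y ^ g * hsym (d - t) js) \<in> K" using is_idealD(3)[OF K] by blast
      then show ?thesis by (simp add: algebra_simps)
    qed
  qed
  finally show ?case .
qed

lemma hsym_case2:
  assumes K: "is_ideal K" and g: "1 \<le> g"
    and pw: "\<And>j. j \<in> V \<Longrightarrow> Var j ^ Suc g \<in> (K :: 'a::comm_ring_1 mpoly set)"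
    and pr: "\<And>i j. i \<in> V \<Longrightarrow> j \<in> V \<Longrightarrow> i \<noteq> j \<Longrightarrow> (Var i * Var j) ^ g \<in> K"
  shows "set js \<subseteq> V \<Longrightarrow> 1 \<le> r \<Longrightarrow> length js * (g - 1) + 1 < r \<Longrightarrow> hsym r js \<in> K"
proof (induction js arbitrary: r)
  case Nil
  then show ?case using is_idealD(1)[OF K] by simp
next
  case (Cons j js)
  have jV: "j \<in> V" using Cons.prems by auto
  show ?case unfolding hsym.simps
  proof (rule ideal_sum[OF K])
    fix t assume t: "t \<in> {..r}"
    show "Var j ^ t * hsym (r - t) js \<in> K"
    proof (cases "Suc g \<le> t")
      case True
      then show ?thesis using pow_in[OF K pw[OF jV]] ideal_mult_right[OF K] by auto
    next
      case False
      show ?thesis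
      proof (cases "t = g")
        case True
        have e: "length (j # js) * (g - 1) = length js * (g - 1) + (g - 1)" by simp
        have "length js * (g - 1) < r - t" using Cons.prems(3) True g e by linarith
        then show ?thesis using hsym_case2a[OF K g pw pr jV] Cons.prems True by auto
      next
        case False
        then have "t \<le> g - 1" using \<open>\<not> Suc g \<le> t\<close> by auto
        have e: "length (j # js) * (g - 1) = length js * (g - 1) + (g - 1)" by simp
        have "length js * (g - 1) + 1 < r - t" using Cons.prems(3) \<open>t \<le> g - 1\<close> g e by linarith
        then have "hsym (r - t) js \<in> K" using Cons.IH Cons.prems by auto
        then show ?thesis using is_idealD(3)[OF K] by blast
      qed
    qed
  qed
qed


lemma sum_pair_split:
  assumes K: "is_ideal K" and fin: "finite A" and ab: "a \<in> A" "b \<in> A" "a \<noteq> b"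
    and rest: "\<And>t. t \<in> A \<Longrightarrow> t \<noteq> a \<Longrightarrow> t \<noteq> b \<Longrightarrow> f t \<in> K"
    and ab_in: "f a + f b \<in> K"
  shows "sum f A \<in> K"
  by (rule ideal_sum_split[OF K fin, of "{a, b}"]) (use ab rest ab_in in auto)

lemma sq_in_case3:
  assumes K: "is_ideal K" and g: "1 \<le> g"
    and pw: "\<And>j. j \<in> V \<Longrightarrow> Var j ^ Suc g \<in> (K :: 'a::comm_ring_1 mpoly set)"
    and pr: "\<And>i j. i \<in> V \<Longrightarrow> j \<in> V \<Longrightarrow> i \<noteq> j \<Longrightarrow> (Var i + Var j) * (Var i * Var j) ^ (g - 1) \<in> K"
    and ij: "i \<in> V" "j \<in> V"
  shows "Var i ^ g * Var j ^ g \<in> K"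
proof (cases "i = j")
  case True
  have "Var i ^ (g + g) \<in> K" using pow_in[OF K pw[OF ij(1)]] g by simp
  then show ?thesis using True by (simp add: power_add)
next
  case False
  obtain h where h: "g = Suc h" using g by (cases g) auto
  have E: "Var j * ((Var i + Var j) * (Var i * Var j) ^ (g - 1))
     = Var i ^ g * Var j ^ g + Var i ^ h * (Var j ^ Suc g :: 'a mpoly)"
    unfolding h by (simp add: power_mult_distrib algebra_simps)
  have "Var j * ((Var i + Var j) * (Var i * Var j) ^ (g - 1)) \<in> K"
    using is_idealD(3)[OF K pr[OF ij False]] by blast
  moreover have "Var i ^ h * (Var j ^ Suc g :: 'a mpoly) \<in> K"
    using is_idealD(3)[OF K pw[OF ij(2)]] by blast
  ultimately have "Var i ^ g * Var j ^ g + Var i ^ h * (Var j ^ Suc g :: 'a mpoly)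
      - Var i ^ h * (Var j ^ Suc g :: 'a mpoly) \<in> K"
    unfolding E[symmetric] by (rule ideal_diff[OF K])
  then show ?thesis by simp
qed

context
  fixes K :: "'a::comm_ring_1 mpoly set" and V :: "nat set" and g :: nat
  assumes K: "is_ideal K" and g3: "3 \<le> g"
    and pw: "\<And>j. j \<in> V \<Longrightarrow> Var j ^ Suc g \<in> K"
    and pr: "\<And>i j. i \<in> V \<Longrightarrow> j \<in> V \<Longrightarrow> i \<noteq> j \<Longrightarrow> (Var i + Var j) * (Var i * Var j) ^ (g - 1) \<in> K"
    and tr: "\<And>i j k. i \<in> V \<Longrightarrow> j \<in> V \<Longrightarrow> k \<in> V \<Longrightarrow> i \<noteq> j \<Longrightarrow> i \<noteq> k \<Longrightarrow> j \<noteq> k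
              \<Longrightarrow> (Var i * Var j * Var k) ^ (g - 1) \<in> K"
begin

lemma sq3: "i \<in> V \<Longrightarrow> j \<in> V \<Longrightarrow> Var i ^ g * Var j ^ g \<in> K"
  by (rule sq_in_case3[OF K _ pw pr]) (use g3 in auto)

lemma hsym_P3:
  assumes xy: "x \<in> V" "y \<in> V" "x \<noteq> y"
  shows "distinct js \<Longrightarrow> set js \<subseteq> V \<Longrightarrow> x \<notin> set js \<Longrightarrow> y \<notin> set js \<Longrightarrow> length js * (g - 2) < e
    \<Longrightarrow> (Var x * Var y) ^ (g - 1) * hsym e js \<in> K"
proof (induction js arbitrary: e)
  case Nil
  then show ?case using is_idealD(1)[OF K] by simp
next
  case (Cons z js)
  have zV: "z \<in> V" and zx: "z \<noteq> x" and zy: "z \<noteq> y" using Cons.prems by auto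
  have "(Var x * Var y) ^ (g - 1) * hsym e (z # js) = (\<Sum>t\<le>e. (Var x * Var y) ^ (g - 1) * (Var z ^ t * hsym (e - t) js))"
    by (simp add: sum_distrib_left)
  also have "\<dots> \<in> K"
  proof (rule ideal_sum[OF K])
    fix t assume t: "t \<in> {..e}"
    show "(Var x * Var y) ^ (g - 1) * (Var z ^ t * hsym (e - t) js) \<in> K"
    proof (cases "g - 1 \<le> t")
      case True
      have E: "Var z ^ t = Var z ^ (g - 1) * (Var z ^ (t - (g - 1)) :: 'a mpoly)"
        using True by (simp add: power_add[symmetric])
      have "(Var x * Var y) ^ (g - 1) * (Var z ^ t * hsym (e - t) js)
         = (Var x * Var y * Var z) ^ (g - 1) * (Var z ^ (t - (g - 1)) * hsym (e - t) js :: 'a mpoly)"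
        unfolding E by (simp add: power_mult_distrib algebra_simps)
      then show ?thesis using ideal_mult_right[OF K tr[OF xy(1,2) zV xy(3) zx[symmetric] zy[symmetric]]] by simp
    next
      case False
      have e: "length (z # js) * (g - 2) = length js * (g - 2) + (g - 2)" by simp
      have "length js * (g - 2) < e - t" using Cons.prems(5) False t e by linarith
      then have "(Var x * Var y) ^ (g - 1) * hsym (e - t) js \<in> K" using Cons.IH Cons.prems by auto
      then have "Var z ^ t * ((Var x * Var y) ^ (g - 1) * hsym (e - t) js) \<in> K" using is_idealD(3)[OF K] by blast
      then show ?thesis by (simp add: algebra_simps)
    qed
  qed
  finally show ?case .
qed

lemma hsym_P2:
  assumes x: "x \<in> V"
  shows "distinct js \<Longrightarrow> set js \<subseteq> V \<Longrightarrow> x \<notin> set js \<Longrightarrow> length js * (g - 2) < d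
    \<Longrightarrow> Var x ^ (g - 1) * hsym (Suc d) js + Var x ^ g * hsym d js \<in> K"
proof (induction js arbitrary: d)
  case Nil
  then show ?case using is_idealD(1)[OF K] by simp
next
  case (Cons y js)
  have yV: "y \<in> V" and xy: "x \<noteq> y" and yjs: "y \<notin> set js" using Cons.prems by auto
  obtain h where h: "g = Suc h" using g3 by (cases g) auto
  show ?case
  proof (cases "js = []")
    case True
    have dh: "h \<le> d" using Cons.prems(4) True h by simp
    have "Var x ^ (g - 1) * hsym (Suc d) (y # js) + Var x ^ g * hsym d (y # js)
        = Var x ^ h * Var y ^ Suc d + Var x ^ Suc h * (Var y ^ d :: 'a mpoly)"
      unfolding True hsym_single h by simp
    also have "\<dots> = ((Var x + Var y) * (Var x * Var y) ^ h) * Var y ^ (d - h)"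
    proof -
      have "d = h + (d - h)" using dh by simp
      then obtain m where m: "d = h + m" by blast
      show ?thesis unfolding m by (simp add: power_mult_distrib power_add algebra_simps)
    qed
    also have "\<dots> \<in> K" using ideal_mult_right[OF K pr[OF x yV xy]] h by simp
    finally show ?thesis .
  next
    case False
    then have len: "1 \<le> length js" by (cases js) auto
    have e: "length (y # js) * (g - 2) = length js * (g - 2) + (g - 2)" by simp
    have "1 * (g - 2) \<le> length js * (g - 2)" using len by (rule mult_right_mono) simp
    then have dg: "g \<le> d" using Cons.prems(4) e g3 by linarith
    define f :: "nat \<Rightarrow> 'a mpoly" where "f t = Var y ^ t * (Var x ^ (g - 1) * hsym (Suc (d - t)) js + Var x ^ g * hsym (d - t) js)" for t
    have "Var x ^ (g - 1) * hsym (Suc d) (y # js) + Var x ^ g * hsym d (y # js)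
        = Var x ^ (g - 1) * Var y ^ Suc d + (\<Sum>t\<le>d. f t)"
    proof -
      have "hsym (Suc d) (y # js) = (\<Sum>t\<le>d. Var y ^ t * hsym (Suc d - t) js) + Var y ^ Suc d * (hsym 0 js :: 'a mpoly)"
        by simp
      also have "(\<Sum>t\<le>d. Var y ^ t * hsym (Suc d - t) js) = (\<Sum>t\<le>d. Var y ^ t * (hsym (Suc (d - t)) js :: 'a mpoly))"
        by (rule sum.cong) (auto simp: Suc_diff_le)
      finally have A: "hsym (Suc d) (y # js) = (\<Sum>t\<le>d. Var y ^ t * hsym (Suc (d - t)) js) + (Var y ^ Suc d :: 'a mpoly)"
        by (simp add: hsym_0)
      show ?thesis unfolding A f_def by (simp add: sum_distrib_left sum.distrib algebra_simps)
    qed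
    also have "\<dots> \<in> K"
    proof (rule is_idealD(2)[OF K])
      show "Var x ^ (g - 1) * Var y ^ Suc d \<in> K"
        using pow_in[OF K pw[OF yV], of "Suc d"] dg is_idealD(3)[OF K] by auto
      show "(\<Sum>t\<le>d. f t) \<in> K"
      proof (rule sum_pair_split[OF K, of _ "g - 1" g])
        show "g - 1 \<in> {..d}" "g \<in> {..d}" "g - 1 \<noteq> g" using dg g3 by auto
        fix t assume t: "t \<in> {..d}" "t \<noteq> g - 1" "t \<noteq> g"
        show "f t \<in> K"
        proof (cases "Suc g \<le> t")
          case True
          then show ?thesis unfolding f_def using pow_in[OF K pw[OF yV]] ideal_mult_right[OF K] by auto
        next
          case False
          then have "t \<le> g - 2" using t by auto
          then have "length js * (g - 2) < d - t" using Cons.prems(4) e t by linarith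
          then have "Var x ^ (g - 1) * hsym (Suc (d - t)) js + Var x ^ g * hsym (d - t) js \<in> K"
            using Cons.IH Cons.prems by auto
          then show ?thesis unfolding f_def using is_idealD(3)[OF K] by blast
        qed
      next
        obtain e0 where e0: "d = g + e0" using dg le_Suc_ex by blast
        have d1: "d - (g - 1) = Suc e0" "d - g = e0" using e0 h by auto
        have "f (g - 1) + f g = (Var x * Var y) ^ h * hsym (Suc (Suc e0)) js
            + ((Var x + Var y) * (Var x * Var y) ^ h) * hsym (Suc e0) js
            + (Var x ^ g * Var y ^ g) * hsym e0 js"
          unfolding f_def d1 unfolding h by (simp add: power_mult_distrib algebra_simps)
        also have "\<dots> \<in> K"
        proof (intro is_idealD(2)[OF K])
          have "length js * (g - 2) < Suc (Suc e0)" using Cons.prems(4) e e0 g3 by linarith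
          then have "(Var x * Var y) ^ (g - 1) * hsym (Suc (Suc e0)) js \<in> K"
            using hsym_P3[OF x yV xy] Cons.prems yjs by auto
          then show "(Var x * Var y) ^ h * hsym (Suc (Suc e0)) js \<in> K" using h by simp
          show "((Var x + Var y) * (Var x * Var y) ^ h) * hsym (Suc e0) js \<in> K"
            using ideal_mult_right[OF K pr[OF x yV xy]] h by simp
          show "(Var x ^ g * Var y ^ g) * hsym e0 js \<in> K"
            using ideal_mult_right[OF K sq3[OF x yV]] by simp
        qed
        finally show "f (g - 1) + f g \<in> K" .
      qed simp
    qed
    finally show ?thesis .
  qed
qed

lemma hsym_P1:
  shows "distinct js \<Longrightarrow> set js \<subseteq> V \<Longrightarrow> 1 \<le> r \<Longrightarrow> length js * (g - 2) + 2 < r \<Longrightarrow> hsym r js \<in> K"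
proof (induction js arbitrary: r)
  case Nil
  then show ?case using is_idealD(1)[OF K] by simp
next
  case (Cons y js)
  have yV: "y \<in> V" and yjs: "y \<notin> set js" using Cons.prems by auto
  have e: "length (y # js) * (g - 2) = length js * (g - 2) + (g - 2)" by simp
  have rg: "Suc g \<le> r" using Cons.prems(4) e g3 by linarith
  show ?case unfolding hsym.simps
  proof (rule sum_pair_split[OF K, of _ "g - 1" g])
    show "g - 1 \<in> {..r}" "g \<in> {..r}" "g - 1 \<noteq> g" using rg g3 by auto
    fix t assume t: "t \<in> {..r}" "t \<noteq> g - 1" "t \<noteq> g"
    show "Var y ^ t * hsym (r - t) js \<in> K"
    proof (cases "Suc g \<le> t")
      case True
      then show ?thesis using pow_in[OF K pw[OF yV]] ideal_mult_right[OF K] by auto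
    next
      case False
      then have "t \<le> g - 2" using t by auto
      then have "length js * (g - 2) + 2 < r - t" using Cons.prems(4) e t by linarith
      then have "hsym (r - t) js \<in> K" using Cons.IH Cons.prems by auto
      then show ?thesis using is_idealD(3)[OF K] by blast
    qed
  next
    have r1: "r - (g - 1) = Suc (r - g)" using rg g3 by auto
    have "length js * (g - 2) < r - g" using Cons.prems(4) e g3 by linarith
    then have "Var y ^ (g - 1) * hsym (Suc (r - g)) js + Var y ^ g * hsym (r - g) js \<in> K"
      using hsym_P2[OF yV] Cons.prems yjs by auto
    then show "Var y ^ (g - 1) * hsym (r - (g - 1)) js + Var y ^ g * hsym (r - g) js \<in> K"
      unfolding r1 .
  qed simp
qed

end


section \<open>Extracting the small generators from the De Concini--Procesi ideal\<close>

lemma sum_minus_part: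
  assumes K: "is_ideal K" and fin: "finite A" and B: "B \<subseteq> A" and rest: "\<And>t. t \<in> A - B \<Longrightarrow> f t \<in> K"
  shows "sum f A - sum f B \<in> K"
proof -
  have e: "sum f A = sum f (A - B) + sum f B" by (rule sum.subset_diff[OF B fin])
  have "sum f A - sum f B = sum f (A - B)" unfolding e by simp
  moreover have "sum f (A - B) \<in> K" by (rule ideal_sum[OF K]) (rule rest)
  ultimately show ?thesis by simp
qed

lemma sum_extract:
  assumes K: "is_ideal K" and fin: "finite A" and B: "B \<subseteq> A" and rest: "\<And>t. t \<in> A - B \<Longrightarrow> f t \<in> K"
    and S: "sum f A \<in> K"
  shows "sum f B \<in> K"
proof -
  have "sum f A - (sum f A - sum f B) \<in> K"
    by (rule ideal_diff[OF K S sum_minus_part[OF K fin B rest]])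
  then show ?thesis by simp
qed

lemma hsym_pair: "hsym r [i, j] = (\<Sum>t\<le>r. Var i ^ t * Var j ^ (r - t) :: 'a::comm_ring_1 mpoly)"
  unfolding hsym.simps(2)[of r i "[j]"] hsym_single by (rule refl)

lemma extract_case2:
  assumes K: "is_ideal K" and pi: "Var i ^ Suc g \<in> (K :: 'a::comm_ring_1 mpoly set)" and pj: "Var j ^ Suc g \<in> K"
    and h: "hsym (2 * g) [i, j] \<in> K"
  shows "(Var i * Var j) ^ g \<in> K"
proof -
  have "(\<Sum>t\<in>{g}. Var i ^ t * Var j ^ (2 * g - t)) \<in> K"
  proof (rule sum_extract[OF K, of "{..2 * g}"])
    show "(\<Sum>t\<le>2 * g. Var i ^ t * Var j ^ (2 * g - t)) \<in> K" using h unfolding hsym_pair .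
    fix t assume t: "t \<in> {..2 * g} - {g}"
    show "Var i ^ t * Var j ^ (2 * g - t) \<in> K"
    proof (cases "Suc g \<le> t")
      case True then show ?thesis using pow_in[OF K pi True] ideal_mult_right[OF K] by blast
    next
      case False
      then have "Suc g \<le> 2 * g - t" using t by auto
      then show ?thesis using pow_in[OF K pj] is_idealD(3)[OF K] by blast
    qed
  qed auto
  then show ?thesis by (simp add: power_mult_distrib)
qed

lemma extract_case3_pair:
  assumes K: "is_ideal K" and g: "1 \<le> g"
    and pi: "Var i ^ Suc g \<in> (K :: 'a::comm_ring_1 mpoly set)" and pj: "Var j ^ Suc g \<in> K"
    and h: "hsym (2 * g - 1) [i, j] \<in> K"
  shows "(Var i + Var j) * (Var i * Var j) ^ (g - 1) \<in> K"
proof -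
  have "(\<Sum>t\<in>{g - 1, g}. Var i ^ t * Var j ^ (2 * g - 1 - t)) \<in> K"
  proof (rule sum_extract[OF K, of "{..2 * g - 1}"])
    show "(\<Sum>t\<le>2 * g - 1. Var i ^ t * Var j ^ (2 * g - 1 - t)) \<in> K" using h unfolding hsym_pair .
    fix t assume t: "t \<in> {..2 * g - 1} - {g - 1, g}"
    show "Var i ^ t * Var j ^ (2 * g - 1 - t) \<in> K"
    proof (cases "Suc g \<le> t")
      case True then show ?thesis using pow_in[OF K pi True] ideal_mult_right[OF K] by blast
    next
      case False
      then have "Suc g \<le> 2 * g - 1 - t" using t g by auto
      then show ?thesis using pow_in[OF K pj] is_idealD(3)[OF K] by blast
    qed
  qed (use g in auto)
  moreover obtain h where h: "g = Suc h" using g by (cases g) auto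
  moreover have "g - 1 \<noteq> g" using g by simp
  ultimately show ?thesis by (simp add: power_mult_distrib algebra_simps)
qed

context
  fixes K :: "'a::comm_ring_1 mpoly set" and V :: "nat set" and g :: nat
  assumes K: "is_ideal K" and g3: "3 \<le> g"
    and pw: "\<And>j. j \<in> V \<Longrightarrow> Var j ^ Suc g \<in> K"
    and pr: "\<And>i j. i \<in> V \<Longrightarrow> j \<in> V \<Longrightarrow> i \<noteq> j \<Longrightarrow> (Var i + Var j) * (Var i * Var j) ^ (g - 1) \<in> K"
begin

lemma sq3': "i \<in> V \<Longrightarrow> j \<in> V \<Longrightarrow> Var i ^ g * Var j ^ g \<in> K"
  by (rule sq_in_case3[OF K _ pw pr]) (use g3 in auto)

lemma L2:
  assumes j: "j \<in> V" and k: "k \<in> V" and jk: "j \<noteq> k" and s: "2 * g - 1 \<le> s"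
  shows "hsym s [j, k] \<in> K"
proof (cases "s = 2 * g - 1")
  case True
  show ?thesis unfolding hsym_pair
  proof (rule sum_pair_split[OF K, of _ "g - 1" g])
    show "g - 1 \<in> {..s}" "g \<in> {..s}" "g - 1 \<noteq> g" using True g3 by auto
    fix t assume t: "t \<in> {..s}" "t \<noteq> g - 1" "t \<noteq> g"
    show "Var j ^ t * Var k ^ (s - t) \<in> K"
    proof (cases "Suc g \<le> t")
      case True then show ?thesis using pow_in[OF K pw[OF j] True] ideal_mult_right[OF K] by blast
    next
      case False
      then have "Suc g \<le> s - t" using t \<open>s = 2 * g - 1\<close> by auto
      then show ?thesis using pow_in[OF K pw[OF k]] is_idealD(3)[OF K] by blast
    qed
  next
    obtain h where h: "g = Suc h" using g3 by (cases g) auto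
    have "Var j ^ (g - 1) * Var k ^ (s - (g - 1)) + Var j ^ g * Var k ^ (s - g)
        = ((Var j + Var k) * (Var j * Var k) ^ (g - 1) :: 'a mpoly)"
      using True h by (simp add: power_mult_distrib algebra_simps)
    then show "Var j ^ (g - 1) * Var k ^ (s - (g - 1)) + Var j ^ g * Var k ^ (s - g) \<in> K"
      using pr[OF j k jk] by simp
  qed simp
next
  case False
  then have s2: "2 * g \<le> s" using s by auto
  show ?thesis unfolding hsym_pair
  proof (rule ideal_sum[OF K])
    fix t assume t: "t \<in> {..s}"
    show "Var j ^ t * Var k ^ (s - t) \<in> K"
    proof (cases "Suc g \<le> t")
      case True then show ?thesis using pow_in[OF K pw[OF j] True] ideal_mult_right[OF K] by blast
    next
      case False
      show ?thesis
      proof (cases "Suc g \<le> s - t")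
        case True then show ?thesis using pow_in[OF K pw[OF k]] is_idealD(3)[OF K] by blast
      next
        case False
        then have tg: "g \<le> t" "g \<le> s - t" using s2 \<open>\<not> Suc g \<le> t\<close> by auto
        have "Var j ^ t * Var k ^ (s - t) = (Var j ^ g * Var k ^ g) * (Var j ^ (t - g) * Var k ^ (s - t - g) :: 'a mpoly)"
        proof -
          have "Var j ^ t = Var j ^ g * (Var j ^ (t - g) :: 'a mpoly)" using tg by (simp add: power_add[symmetric])
          moreover have "Var k ^ (s - t) = Var k ^ g * (Var k ^ (s - t - g) :: 'a mpoly)" using tg by (metis le_add_diff_inverse power_add)
          ultimately show ?thesis by (simp add: algebra_simps)
        qed
        then show ?thesis using ideal_mult_right[OF K sq3'[OF j k]] by simp
      qed
    qed
  qed
qed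

lemma extract_triple:
  assumes i: "i \<in> V" and j: "j \<in> V" and k: "k \<in> V" and ij: "i \<noteq> j" and ik: "i \<noteq> k" and jk: "j \<noteq> k"
    and h: "hsym (3 * g - 3) [i, j, k] \<in> K"
  shows "(Var i * Var j * Var k) ^ (g - 1) \<in> K"
proof -
  obtain m where m: "g = Suc (Suc m)" and m1: "1 \<le> m" using g3 by (cases g; cases "g - 1") auto
  let ?N = "3 * g - 3"
  have P0: "(\<Sum>t\<in>{g - 1, g}. Var i ^ t * hsym (?N - t) [j, k]) \<in> K"
  proof (rule sum_extract[OF K, of "{..?N}"])
    show "{g - 1, g} \<subseteq> {..?N}" using g3 by auto
    show "(\<Sum>t\<le>?N. Var i ^ t * hsym (?N - t) [j, k]) \<in> K" using h by simp
    fix t assume t: "t \<in> {..?N} - {g - 1, g}"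
    show "Var i ^ t * hsym (?N - t) [j, k] \<in> K"
    proof (cases "Suc g \<le> t")
      case True then show ?thesis using pow_in[OF K pw[OF i] True] ideal_mult_right[OF K] by blast
    next
      case False
      then have "2 * g - 1 \<le> ?N - t" using t by auto
      then show ?thesis using L2[OF j k jk] is_idealD(3)[OF K] by blast
    qed
  qed simp
  have "g - 1 \<noteq> g" using g3 by simp
  then have P: "Var i ^ (g - 1) * hsym (?N - (g - 1)) [j, k] + Var i ^ g * hsym (?N - g) [j, k] \<in> K"
    using P0 by (simp del: hsym.simps)
  have N1a: "?N - (g - 1) = 2 * m + 2" "?N - g = 2 * m + 1" "g - 1 = m + 1" using m by auto
  have N1d: "g = m + 2" using m by auto
  note N1 = N1a N1d
  define X :: "'a mpoly" where "X = Var i ^ (m + 1) * hsym (2 * m + 2) [j, k]"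
  define Y :: "'a mpoly" where "Y = Var i ^ (m + 2) * hsym (2 * m + 1) [j, k]"
  have XY: "X + Y \<in> K" unfolding X_def Y_def
    by (rule P[unfolded N1a(1) N1a(2), unfolded N1a(3), unfolded N1d])
  define X' :: "'a mpoly" where "X' = Var i ^ (m + 1) * (\<Sum>a\<in>{m, m + 1, m + 2}. Var j ^ a * Var k ^ (2 * m + 2 - a))"
  define Y' :: "'a mpoly" where "Y' = (\<Sum>a\<in>{m, m + 1}. Var i ^ (m + 2) * (Var j ^ a * Var k ^ (2 * m + 1 - a)))"
  have X: "X - X' \<in> K"
  proof -
    have "(\<Sum>a\<le>2 * m + 2. Var j ^ a * Var k ^ (2 * m + 2 - a)) - (\<Sum>a\<in>{m, m + 1, m + 2}. Var j ^ a * Var k ^ (2 * m + 2 - a)) \<in> K"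
    proof (rule sum_minus_part[OF K])
      fix a assume a: "a \<in> {..2 * m + 2} - {m, m + 1, m + 2}"
      show "Var j ^ a * Var k ^ (2 * m + 2 - a) \<in> K"
      proof (cases "Suc g \<le> a")
        case True then show ?thesis using pow_in[OF K pw[OF j] True] ideal_mult_right[OF K] by blast
      next
        case False
        then have "Suc g \<le> 2 * m + 2 - a" using a m by auto
        then show ?thesis using pow_in[OF K pw[OF k]] is_idealD(3)[OF K] by blast
      qed
    qed auto
    then have "Var i ^ (m + 1) * ((\<Sum>a\<le>2 * m + 2. Var j ^ a * Var k ^ (2 * m + 2 - a)) - (\<Sum>a\<in>{m, m + 1, m + 2}. Var j ^ a * Var k ^ (2 * m + 2 - a))) \<in> K"
      using is_idealD(3)[OF K] by blast
    then show ?thesis unfolding X_def X'_def hsym_pair by (simp add: right_diff_distrib)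
  qed
  have Y: "Y - Y' \<in> K"
  proof -
    have "(\<Sum>a\<le>2 * m + 1. Var i ^ (m + 2) * (Var j ^ a * Var k ^ (2 * m + 1 - a))) - Y' \<in> K"
      unfolding Y'_def
    proof (rule sum_minus_part[OF K])
      fix a assume a: "a \<in> {..2 * m + 1} - {m, m + 1}"
      show "Var i ^ (m + 2) * (Var j ^ a * Var k ^ (2 * m + 1 - a)) \<in> K"
      proof (cases "m + 2 \<le> a")
        case True
        have "Var i ^ (m + 2) * (Var j ^ a * Var k ^ (2 * m + 1 - a))
            = (Var i ^ g * Var j ^ g) * (Var j ^ (a - g) * Var k ^ (2 * m + 1 - a) :: 'a mpoly)"
        proof -
          have "g \<le> a" using True m by simp
          then have "Var j ^ a = Var j ^ g * (Var j ^ (a - g) :: 'a mpoly)" by (metis le_add_diff_inverse power_add)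
          then show ?thesis using m by (simp add: algebra_simps)
        qed
        then show ?thesis using ideal_mult_right[OF K sq3'[OF i j]] by simp
      next
        case False
        then have am: "a + 1 \<le> m" using a by auto
        have "Var i ^ (m + 2) * (Var j ^ a * Var k ^ (2 * m + 1 - a))
            = (Var i ^ g * Var k ^ g) * (Var j ^ a * Var k ^ (2 * m + 1 - a - g) :: 'a mpoly)"
        proof -
          have "g \<le> 2 * m + 1 - a" using am m by simp
          then have "Var k ^ (2 * m + 1 - a) = Var k ^ g * (Var k ^ (2 * m + 1 - a - g) :: 'a mpoly)"
            by (metis le_add_diff_inverse power_add)
          then show ?thesis using m by (simp add: algebra_simps)
        qed
        then show ?thesis using ideal_mult_right[OF K sq3'[OF i k]] by simp
      qed
    qed auto
    then show ?thesis unfolding Y_def hsym_pair sum_distrib_left .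
  qed
  have "X' + Y' = (X + Y) - (X - X') - (Y - Y')" by simp
  then have X'Y': "X' + Y' \<in> K" using XY X Y ideal_diff[OF K] by metis
  have id: "X' + Y' = (Var i * Var j * Var k) ^ (m + 1)
      + ((Var i + Var j) * (Var i * Var j) ^ (m + 1)) * Var k ^ m
      + ((Var i + Var k) * (Var i * Var k) ^ (m + 1)) * Var j ^ m"
  proof -
    have s3: "(\<Sum>a\<in>{m, m + 1, m + 2}. Var j ^ a * Var k ^ (2 * m + 2 - a))
       = Var j ^ m * Var k ^ (m + 2) + Var j ^ (m + 1) * Var k ^ (m + 1) + (Var j ^ (m + 2) * Var k ^ m :: 'a mpoly)"
      by (simp add: mult_2)
    have s2: "Y' = Var i ^ (m + 2) * (Var j ^ m * Var k ^ (m + 1)) + Var i ^ (m + 2) * (Var j ^ (m + 1) * Var k ^ m)"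
      unfolding Y'_def by (simp add: mult_2)
    show ?thesis unfolding X'_def s3 s2 by (simp add: power_mult_distrib algebra_simps)
  qed
  have p1: "((Var i + Var j) * (Var i * Var j) ^ (m + 1)) * Var k ^ m \<in> K"
    using ideal_mult_right[OF K pr[OF i j ij]] N1 by simp
  have p2: "((Var i + Var k) * (Var i * Var k) ^ (m + 1)) * Var j ^ m \<in> K"
    using ideal_mult_right[OF K pr[OF i k ik]] N1 by simp
  have "(Var i * Var j * Var k) ^ (m + 1) = (X' + Y') - ((Var i + Var j) * (Var i * Var j) ^ (m + 1)) * Var k ^ m
      - ((Var i + Var k) * (Var i * Var k) ^ (m + 1)) * Var j ^ m"
    unfolding id by simp
  then have "(Var i * Var j * Var k) ^ (m + 1) \<in> K"
    using X'Y' p1 p2 ideal_diff[OF K] by metis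
  then show ?thesis using N1 by simp
qed

end


section \<open>Generic comparison of the two ideals\<close>

lemma DP_sub:
  assumes part: "is_partition n lam" and K: "is_ideal (K :: 'k::comm_ring_1 mpoly set)"
    and E: "\<And>s. 1 \<le> s \<Longrightarrow> esym s {1..n} \<in> K"
    and H: "\<And>r js. distinct js \<Longrightarrow> set js \<subseteq> {1..n} \<Longrightarrow> r \<le> n - length js
       \<Longrightarrow> (\<Sum>i\<in>{1..length js}. conj_part lam i) < r + length js \<Longrightarrow> hsym r js \<in> K"
  shows "DP_ideal n lam \<subseteq> K"
  unfolding DP_ideal_def
proof (rule ideal_gen_least[OF K], rule subsetI)
  fix p assume "p \<in> (DP_gens n lam :: 'k mpoly set)"
  then obtain r S where rs: "p = esym r S" "S \<subseteq> {1..n}" "r \<le> card S"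
    "(\<Sum>i\<in>{1..n - card S}. conj_part lam i) < r + (n - card S)"
    by (rule DP_gensE[OF part])
  define js where "js = sorted_list_of_set ({1..n} - S)"
  have js: "distinct js" "set js = {1..n} - S" "length js = card ({1..n} - S)"
    unfolding js_def by auto
  have cS: "card ({1..n} - S) = n - card S"
    using rs(2) by (simp add: card_Diff_subset finite_subset)
  have Seq: "S = {1..n} - set js" using js(2) rs(2) by auto
  have lj: "length js = n - card S" using js(3) cS by simp
  have cSn: "card S \<le> n" using card_mono[OF _ rs(2)] by simp
  have h1: "r \<le> n - length js" using rs(3) lj cSn by simp
  have h2: "(\<Sum>i\<in>{1..length js}. conj_part lam i) < r + length js" using rs(4) lj by simp
  have "hsym r js \<in> K"
    by (rule H[OF js(1) _ h1 h2]) (use js in auto)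
  moreover have "esym r ({1..n} - set js) - (-1) ^ r * hsym r js \<in> K"
    by (rule esym_hsym[OF K _ E]) (use js in auto)
  ultimately have "esym r ({1..n} - set js) \<in> K"
    using ideal_eq_cancel[OF K] is_idealD(3)[OF K] by blast
  then show "p \<in> K" using rs(1) Seq by simp
qed

lemma E_DP:
  assumes part: "is_partition n lam" and s: "1 \<le> s"
  shows "esym s {1..n} \<in> (DP_ideal n lam :: 'k::comm_ring_1 mpoly set)"
  by (rule DP_mem[OF part _ s]) (use s in auto)

lemma hsym_in_DP:
  assumes part: "is_partition n lam" and js: "distinct js" "set js \<subseteq> {1..n}" and r: "1 \<le> r"
    and cond: "(\<Sum>i\<in>{1..length js}. conj_part lam i) < r + length js"
  shows "hsym r js \<in> (DP_ideal n lam :: 'k::comm_ring_1 mpoly set)"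
proof -
  let ?I = "DP_ideal n lam :: 'k mpoly set"
  have K: "is_ideal ?I" unfolding DP_ideal_def by (rule ideal_gen_is_ideal)
  have cS: "card ({1..n} - set js) = n - length js"
    using js by (simp add: card_Diff_subset distinct_card)
  have lj: "n - card ({1..n} - set js) = length js"
  proof -
    have "length js \<le> n" using js card_mono[OF _ js(2)] by (simp add: distinct_card)
    then show ?thesis using cS by simp
  qed
  have "esym r ({1..n} - set js) \<in> ?I"
    by (rule DP_mem[OF part _ r]) (use cond lj in auto)
  moreover have "esym r ({1..n} - set js) - (-1) ^ r * hsym r js \<in> ?I"
    by (rule esym_hsym[OF K _ E_DP[OF part]]) (use js in auto)
  ultimately have "esym r ({1..n} - set js) - (esym r ({1..n} - set js) - (-1) ^ r * hsym r js) \<in> ?I"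
    using ideal_diff[OF K] by blast
  then have A: "(-1) ^ r * hsym r js \<in> ?I" by simp
  have "(-1) ^ r * ((-1) ^ r * hsym r js) \<in> ?I" by (rule is_idealD(3)[OF K A])
  moreover have "(-1) ^ r * ((-1) ^ r * hsym r js) = (hsym r js :: 'k mpoly)"
    by (simp add: mult.assoc[symmetric] power_mult_distrib[symmetric])
  ultimately show ?thesis by simp
qed

lemma Sk_cond:
  assumes part: "is_partition n (replicate a u @ replicate c (u - 1) @ replicate e 1)"
    and u: "1 \<le> u" and k: "k \<le> n" and r: "r \<le> n - k"
    and cond: "(\<Sum>i\<in>{1..k}. conj_part (replicate a u @ replicate c (u - 1) @ replicate e 1) i) < r + k"
  shows "k \<le> u - 1" "k * (a + c) + (if k = 0 then 0 else e) < r + k"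
proof -
  show ku: "k \<le> u - 1"
  proof (rule ccontr)
    assume "\<not> k \<le> u - 1"
    then have "u \<le> k" by simp
    then have "n \<le> (\<Sum>i\<in>{1..k}. conj_part (replicate a u @ replicate c (u - 1) @ replicate e 1) i)"
      by (rule Sk_large[OF part u])
    then show False using cond r k by linarith
  qed
  show "k * (a + c) + (if k = 0 then 0 else e) < r + k"
    using cond Sk_small[OF ku] by simp
qed

lemma shape_facts:
  assumes part: "is_partition n (replicate a u @ replicate c (u - 1) @ replicate 0 1)" and n: "1 \<le> n"
  shows "1 \<le> u" "c = 0 \<or> 2 \<le> u"
proof -
  let ?l = "replicate a u @ replicate c (u - 1) @ replicate 0 1"
  have pos: "\<forall>x\<in>set ?l. 0 < x" using part unfolding is_partition_def by blast
  have sl: "sum_list ?l = n" using part unfolding is_partition_def by blast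
  show "c = 0 \<or> 2 \<le> u"
  proof (rule ccontr)
    assume "\<not> (c = 0 \<or> 2 \<le> u)"
    then have "u - 1 \<in> set ?l" "u - 1 = 0" by auto
    then show False using pos by fastforce
  qed
  show "1 \<le> u"
  proof (rule ccontr)
    assume "\<not> 1 \<le> u"
    then have u0: "u = 0" by simp
    have "a = 0"
    proof (rule ccontr)
      assume "a \<noteq> 0" then have "u \<in> set ?l" by simp
      then show False using pos u0 by fastforce
    qed
    moreover have "c = 0"
    proof (rule ccontr)
      assume "c \<noteq> 0" then have "u - 1 \<in> set ?l" by simp
      then show False using pos u0 by fastforce
    qed
    ultimately have z: "sum_list ?l = 0" by simp
    have "n = 0" using sl z by (metis)
    then show False using n by simp
  qed
qed

lemma S1_eq:
  assumes "1 \<le> u" "c = 0 \<or> 2 \<le> u"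
  shows "(\<Sum>i\<in>{1..1}. conj_part (replicate a u @ replicate c (u - 1) @ replicate e 1) i) = a + c + e"
proof -
  have c: "conj_part (replicate a u @ replicate c (u - 1) @ replicate e 1) 1
     = (if 1 \<le> u then a else 0) + (if 1 \<le> u - 1 then c else 0) + (if (1::nat) \<le> 1 then e else 0)"
    by (rule conj_part_shape)
  have "{1..1::nat} = {1}" by simp
  then show ?thesis using c assms by auto
qed


lemma length_le_n: "distinct js \<Longrightarrow> set js \<subseteq> {1..n} \<Longrightarrow> length js \<le> n"
  using card_mono[of "{1..n}" "set js"] by (simp add: distinct_card)

lemma DP_is_ideal: "is_ideal (DP_ideal n lam)"
  unfolding DP_ideal_def by (rule ideal_gen_is_ideal)

lemma case1:
  assumes n: "1 \<le> n" and part: "is_partition n lam"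
    and lam: "lam = replicate a u @ replicate c (u - 1)" and g: "g = a + c"
  shows "(DP_ideal n lam :: 'k::field_char_0 mpoly set) =
         ideal_gen ({esym r {1..n} | r. 1 \<le> r \<and> r \<le> g - 1} \<union> {Var i ^ g | i. i \<in> {1..n}})"
proof -
  let ?l = "replicate a u @ replicate c (u - 1) @ replicate 0 1"
  have l: "lam = ?l" using lam by simp
  have part': "is_partition n ?l" using part l by simp
  have u: "1 \<le> u" "c = 0 \<or> 2 \<le> u" using shape_facts[OF part' n] by auto
  have g1: "1 \<le> g"
  proof (rule ccontr)
    assume "\<not> 1 \<le> g"
    then have "lam = []" using g lam by simp
    then show False using part n unfolding is_partition_def by simp
  qed
  define J :: "'k mpoly set" where
    "J = ideal_gen ({esym r {1..n} | r. 1 \<le> r \<and> r \<le> g - 1} \<union> {Var i ^ g | i. i \<in> {1..n}})"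
  have KJ: "is_ideal J" unfolding J_def by (rule ideal_gen_is_ideal)
  have pwJ: "\<And>j. j \<in> {1..n} \<Longrightarrow> Var j ^ g \<in> J" unfolding J_def by (rule ideal_gen_base) blast
  have lowJ: "\<And>s. 1 \<le> s \<Longrightarrow> s \<le> g - 1 \<Longrightarrow> esym s {1..n} \<in> J" unfolding J_def by (rule ideal_gen_base) blast
  have pwJ': "\<And>j. j \<in> {1..n} \<Longrightarrow> Var j ^ Suc (g - 1) \<in> J" using pwJ g1 by simp
  have EJ: "\<And>s. 1 \<le> s \<Longrightarrow> esym s {1..n} \<in> J"
    by (rule esym_all_in[OF KJ _ lowJ pwJ']) auto
  let ?I = "DP_ideal n lam :: 'k mpoly set"
  have "?I \<subseteq> J"
  proof (rule DP_sub[OF part KJ EJ])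
    fix r js assume js: "distinct js" "set js \<subseteq> {1..n}" and r: "r \<le> n - length js"
      and cond: "(\<Sum>i\<in>{1..length js}. conj_part lam i) < r + length js"
    have kn: "length js \<le> n" by (rule length_le_n[OF js])
    have "length js * (a + c) + (if length js = 0 then 0 else 0) < r + length js"
      by (rule Sk_cond(2)[OF part' u(1) kn r]) (use cond l in simp)
    then have "length js * g < r + length js" using g by simp
    moreover have "length js * g = length js * (g - 1) + length js" using g1
      by (metis add.commute le_add_diff_inverse mult.right_neutral distrib_left)
    ultimately have "length js * (g - 1) < r" by linarith
    then show "hsym r js \<in> J" using hsym_case1[OF KJ, of "{1..n}" g js r] pwJ js(2) by blast
  qed
  moreover have "J \<subseteq> ?I"
    unfolding J_def
  proof (rule ideal_gen_least[OF DP_is_ideal], rule subsetI)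
    fix p :: "'k mpoly" assume "p \<in> {esym r {1..n} | r. 1 \<le> r \<and> r \<le> g - 1} \<union> {Var i ^ g | i. i \<in> {1..n}}"
    then show "p \<in> ?I"
    proof
      assume "p \<in> {esym r {1..n} | r. 1 \<le> r \<and> r \<le> g - 1}"
      then show ?thesis using E_DP[OF part] by blast
    next
      assume "p \<in> {Var i ^ g | i. i \<in> {1..n}}"
      then obtain i where i: "i \<in> {1..n}" "p = Var i ^ g" by blast
      have "(\<Sum>i\<in>{1..length [i]}. conj_part lam i) < g + length [i]"
        using S1_eq[OF u, of a 0] l g by simp
      then have "hsym g [i] \<in> ?I" by (intro hsym_in_DP[OF part]) (use i g1 in auto)
      then show ?thesis using i unfolding hsym_single by simp
    qed
  qed
  ultimately show ?thesis unfolding J_def by blast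
qed


lemma case2:
  assumes n: "1 \<le> n" and part: "is_partition n lam"
    and lam: "lam = replicate a u @ replicate c (u - 1) @ [1]" and u3: "3 \<le> u" and g: "g = a + c" and g1: "1 < g"
  shows "(DP_ideal n lam :: 'k::field_char_0 mpoly set) =
         ideal_gen ({esym r {1..n} | r. 1 \<le> r \<and> r \<le> g} \<union> {Var i ^ (g + 1) | i. i \<in> {1..n}}
            \<union> {(Var i * Var j) ^ g | i j. 1 \<le> i \<and> i < j \<and> j \<le> n})"
proof -
  let ?l = "replicate a u @ replicate c (u - 1) @ replicate 1 1"
  have l: "lam = ?l" using lam by simp
  have part': "is_partition n ?l" using part l by simp
  have u: "1 \<le> u" "c = 0 \<or> 2 \<le> u" using u3 by auto
  define J :: "'k mpoly set" where
    "J = ideal_gen ({esym r {1..n} | r. 1 \<le> r \<and> r \<le> g} \<union> {Var i ^ (g + 1) | i. i \<in> {1..n}}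
            \<union> {(Var i * Var j) ^ g | i j. 1 \<le> i \<and> i < j \<and> j \<le> n})"
  have KJ: "is_ideal J" unfolding J_def by (rule ideal_gen_is_ideal)
  have pwJ: "\<And>j. j \<in> {1..n} \<Longrightarrow> Var j ^ Suc g \<in> J" unfolding J_def by (rule ideal_gen_base) auto
  have lowJ: "\<And>s. 1 \<le> s \<Longrightarrow> s \<le> g \<Longrightarrow> esym s {1..n} \<in> J" unfolding J_def by (rule ideal_gen_base) blast
  have mem3: "\<And>a b. 1 \<le> a \<Longrightarrow> a < b \<Longrightarrow> b \<le> n \<Longrightarrow> (Var a * Var b) ^ g \<in> J"
    unfolding J_def by (rule ideal_gen_base) blast
  have prJ: "\<And>i j. i \<in> {1..n} \<Longrightarrow> j \<in> {1..n} \<Longrightarrow> i \<noteq> j \<Longrightarrow> (Var i * Var j) ^ g \<in> J"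
  proof -
    fix i j assume ij: "i \<in> {1..n}" "j \<in> {1..n}" "i \<noteq> j"
    show "(Var i * Var j) ^ g \<in> J"
    proof (cases "i < j")
      case True then show ?thesis using ij mem3[of i j] by auto
    next
      case False
      then have "(Var j * Var i) ^ g \<in> J" using ij mem3[of j i] by auto
      then show ?thesis by (simp add: mult.commute)
    qed
  qed
  have EJ: "\<And>s. 1 \<le> s \<Longrightarrow> esym s {1..n} \<in> J"
    by (rule esym_all_in[OF KJ _ lowJ pwJ]) auto
  let ?I = "DP_ideal n lam :: 'k mpoly set"
  have "?I \<subseteq> J"
  proof (rule DP_sub[OF part KJ EJ])
    fix r js assume js: "distinct js" "set js \<subseteq> {1..n}" and r: "r \<le> n - length js"
      and cond: "(\<Sum>i\<in>{1..length js}. conj_part lam i) < r + length js"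
    have kn: "length js \<le> n" by (rule length_le_n[OF js])
    show "hsym r js \<in> J"
    proof (cases "js = []")
      case True
      then have "0 < r" using cond by simp
      then show ?thesis using True is_idealD(1)[OF KJ] by simp
    next
      case False
      have "length js * (a + c) + (if length js = 0 then 0 else 1) < r + length js"
        by (rule Sk_cond(2)[OF part' u(1) kn r]) (use cond l in simp)
      then have c1: "length js * g + 1 < r + length js" using g False by simp
      moreover have "length js * g = length js * (g - 1) + length js" using g1
        by (metis add.commute le_add_diff_inverse less_imp_le mult.right_neutral distrib_left)
      ultimately have "length js * (g - 1) + 1 < r" by linarith
      moreover have "1 \<le> r" using calculation by linarith
      ultimately show ?thesis using hsym_case2[OF KJ _ pwJ prJ js(2)] g1 by auto
    qed
  qed
  moreover have "J \<subseteq> ?I"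
  proof -
    have KI: "is_ideal ?I" by (rule DP_is_ideal)
    have pwI: "\<And>i. i \<in> {1..n} \<Longrightarrow> Var i ^ Suc g \<in> ?I"
    proof -
      fix i assume i: "i \<in> {1..n}"
      have "(\<Sum>i\<in>{1..length [i]}. conj_part lam i) < Suc g + length [i]"
        using S1_eq[OF u, of a 1] l g by simp
      then have "hsym (Suc g) [i] \<in> ?I" by (intro hsym_in_DP[OF part]) (use i in auto)
      then show "Var i ^ Suc g \<in> ?I" unfolding hsym_single .
    qed
    show ?thesis unfolding J_def
    proof (rule ideal_gen_least[OF KI], rule subsetI)
      fix p :: "'k mpoly"
      assume "p \<in> {esym r {1..n} | r. 1 \<le> r \<and> r \<le> g} \<union> {Var i ^ (g + 1) | i. i \<in> {1..n}}
            \<union> {(Var i * Var j) ^ g | i j. 1 \<le> i \<and> i < j \<and> j \<le> n}"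
      then consider (e) r where "p = esym r {1..n}" "1 \<le> r"
        | (v) i where "p = Var i ^ (g + 1)" "i \<in> {1..n}"
        | (p) i j where "p = (Var i * Var j) ^ g" "1 \<le> i" "i < j" "j \<le> n"
        by blast
      then show "p \<in> ?I"
      proof cases
        case e then show ?thesis using E_DP[OF part] by simp
      next
        case v then show ?thesis using pwI by simp
      next
        case p
        have ij: "i \<in> {1..n}" "j \<in> {1..n}" using p by auto
        have k2: "2 \<le> u - 1" using u3 by simp
        have len2: "length [i, j] = 2" by simp
        have "(\<Sum>i\<in>{1..length [i, j]}. conj_part lam i) < 2 * g + length [i, j]"
          unfolding len2 l Sk_small[OF k2] using g by simp
        then have "hsym (2 * g) [i, j] \<in> ?I"
          by (intro hsym_in_DP[OF part]) (use p g1 in auto)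
        then show ?thesis using extract_case2[OF KI pwI[OF ij(1)] pwI[OF ij(2)]] p by simp
      qed
    qed
  qed
  ultimately show ?thesis unfolding J_def by blast
qed

lemma triple_sym:
  assumes T: "\<And>a b c. a \<in> V \<Longrightarrow> b \<in> V \<Longrightarrow> c \<in> V \<Longrightarrow> a < b \<Longrightarrow> b < c \<Longrightarrow> P (Var a * Var b * Var c :: 'a::comm_ring_1 mpoly)"
    and ijk: "i \<in> V" "j \<in> V" "k \<in> V" "i \<noteq> j" "i \<noteq> k" "j \<noteq> k"
  shows "P (Var i * Var j * Var k :: 'a mpoly)"
proof -
  have "(i < j \<and> j < k) \<or> (i < k \<and> k < j) \<or> (j < i \<and> i < k) \<or> (j < k \<and> k < i) \<or> (k < i \<and> i < j) \<or> (k < j \<and> j < i)"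
    using ijk by linarith
  then show ?thesis
  proof (elim disjE conjE)
    assume "i < j" "j < k" then show ?thesis using T[of i j k] ijk by simp
  next
    assume "i < k" "k < j" then show ?thesis using T[of i k j] ijk by (simp add: ac_simps)
  next
    assume "j < i" "i < k" then show ?thesis using T[of j i k] ijk by (simp add: ac_simps)
  next
    assume "j < k" "k < i" then show ?thesis using T[of j k i] ijk by (simp add: ac_simps)
  next
    assume "k < i" "i < j" then show ?thesis using T[of k i j] ijk by (simp add: ac_simps)
  next
    assume "k < j" "j < i" then show ?thesis using T[of k j i] ijk by (simp add: ac_simps)
  qed
qed


lemma case3:
  assumes n: "1 \<le> n" and part: "is_partition n lam"
    and lam: "lam = replicate a u @ replicate c (u - 1) @ [1, 1]" and u4: "4 \<le> u" and g: "g = a + c + 1" and g2: "2 < g"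
  shows "(DP_ideal n lam :: 'k::field_char_0 mpoly set) =
         ideal_gen ({esym r {1..n} | r. 1 \<le> r \<and> r \<le> g} \<union> {Var i ^ (g + 1) | i. i \<in> {1..n}}
            \<union> {(Var i + Var j) * (Var i * Var j) ^ (g - 1) | i j. i \<in> {1..n} \<and> j \<in> {1..n} \<and> i \<noteq> j}
            \<union> {(Var i * Var j * Var k) ^ (g - 1) | i j k. 1 \<le> i \<and> i < j \<and> j < k \<and> k \<le> n})"
proof -
  let ?l = "replicate a u @ replicate c (u - 1) @ replicate 2 1"
  have l: "lam = ?l" using lam by (simp add: numeral_2_eq_2)
  have part': "is_partition n ?l" using part l by simp
  have u: "1 \<le> u" "c = 0 \<or> 2 \<le> u" using u4 by auto
  have g3: "3 \<le> g" using g2 by simp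
  define J :: "'k mpoly set" where
    "J = ideal_gen ({esym r {1..n} | r. 1 \<le> r \<and> r \<le> g} \<union> {Var i ^ (g + 1) | i. i \<in> {1..n}}
            \<union> {(Var i + Var j) * (Var i * Var j) ^ (g - 1) | i j. i \<in> {1..n} \<and> j \<in> {1..n} \<and> i \<noteq> j}
            \<union> {(Var i * Var j * Var k) ^ (g - 1) | i j k. 1 \<le> i \<and> i < j \<and> j < k \<and> k \<le> n})"
  have KJ: "is_ideal J" unfolding J_def by (rule ideal_gen_is_ideal)
  have pwJ: "\<And>j. j \<in> {1..n} \<Longrightarrow> Var j ^ Suc g \<in> J" unfolding J_def by (rule ideal_gen_base) auto
  have lowJ: "\<And>s. 1 \<le> s \<Longrightarrow> s \<le> g \<Longrightarrow> esym s {1..n} \<in> J" unfolding J_def by (rule ideal_gen_base) blast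
  have prJ: "\<And>i j. i \<in> {1..n} \<Longrightarrow> j \<in> {1..n} \<Longrightarrow> i \<noteq> j \<Longrightarrow> (Var i + Var j) * (Var i * Var j) ^ (g - 1) \<in> J"
    unfolding J_def by (rule ideal_gen_base) blast
  have mem3: "\<And>x y z. 1 \<le> x \<Longrightarrow> x < y \<Longrightarrow> y < z \<Longrightarrow> z \<le> n \<Longrightarrow> (Var x * Var y * Var z) ^ (g - 1) \<in> J"
    unfolding J_def by (rule ideal_gen_base) blast
  have trJ: "\<And>i j k. i \<in> {1..n} \<Longrightarrow> j \<in> {1..n} \<Longrightarrow> k \<in> {1..n} \<Longrightarrow> i \<noteq> j \<Longrightarrow> i \<noteq> k \<Longrightarrow> j \<noteq> k
              \<Longrightarrow> (Var i * Var j * Var k) ^ (g - 1) \<in> J"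
  proof -
    fix i j k assume ijk: "i \<in> {1..n}" "j \<in> {1..n}" "k \<in> {1..n}" "i \<noteq> j" "i \<noteq> k" "j \<noteq> k"
    show "(Var i * Var j * Var k) ^ (g - 1) \<in> J"
      by (rule triple_sym[where P = "\<lambda>x. x ^ (g - 1) \<in> J", OF _ ijk]) (use mem3 in auto)
  qed
  have EJ: "\<And>s. 1 \<le> s \<Longrightarrow> esym s {1..n} \<in> J"
    by (rule esym_all_in[OF KJ _ lowJ pwJ]) auto
  let ?I = "DP_ideal n lam :: 'k mpoly set"
  have "?I \<subseteq> J"
  proof (rule DP_sub[OF part KJ EJ])
    fix r js assume js: "distinct js" "set js \<subseteq> {1..n}" and r: "r \<le> n - length js"
      and cond: "(\<Sum>i\<in>{1..length js}. conj_part lam i) < r + length js"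
    have kn: "length js \<le> n" by (rule length_le_n[OF js])
    show "hsym r js \<in> J"
    proof (cases "js = []")
      case True
      then have "0 < r" using cond by simp
      then show ?thesis using True is_idealD(1)[OF KJ] by simp
    next
      case False
      have "length js * (a + c) + (if length js = 0 then 0 else 2) < r + length js"
        by (rule Sk_cond(2)[OF part' u(1) kn r]) (use cond l in simp)
      then have c1: "length js * (g - 1) + 2 < r + length js" using g False by simp
      moreover have "length js * (g - 1) = length js * (g - 2) + length js" using g3
      proof -
        have "g - 1 = (g - 2) + 1" using g3 by simp
        then show ?thesis by (simp add: distrib_left)
      qed
      ultimately have "length js * (g - 2) + 2 < r" by linarith
      moreover have "1 \<le> r" using calculation by linarith
      ultimately show ?thesis using hsym_P1[OF KJ g3 pwJ prJ trJ js] by auto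
    qed
  qed
  moreover have "J \<subseteq> ?I"
  proof -
    have KI: "is_ideal ?I" by (rule DP_is_ideal)
    have pwI: "\<And>i. i \<in> {1..n} \<Longrightarrow> Var i ^ Suc g \<in> ?I"
    proof -
      fix i assume i: "i \<in> {1..n}"
      have "(\<Sum>i\<in>{1..length [i]}. conj_part lam i) < Suc g + length [i]"
        using S1_eq[OF u, of a 2] l g by simp
      then have "hsym (Suc g) [i] \<in> ?I" by (intro hsym_in_DP[OF part]) (use i in auto)
      then show "Var i ^ Suc g \<in> ?I" unfolding hsym_single .
    qed
    have prI: "\<And>i j. i \<in> {1..n} \<Longrightarrow> j \<in> {1..n} \<Longrightarrow> i \<noteq> j \<Longrightarrow> (Var i + Var j) * (Var i * Var j) ^ (g - 1) \<in> ?I"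
    proof -
      fix i j assume ij: "i \<in> {1..n}" "j \<in> {1..n}" "i \<noteq> j"
      have k2: "2 \<le> u - 1" using u4 by simp
      have len2: "length [i, j] = 2" by simp
      have "(\<Sum>i\<in>{1..length [i, j]}. conj_part lam i) < (2 * g - 1) + length [i, j]"
        unfolding len2 l Sk_small[OF k2] using g by simp
      then have "hsym (2 * g - 1) [i, j] \<in> ?I"
        by (intro hsym_in_DP[OF part]) (use ij g3 in auto)
      then show "(Var i + Var j) * (Var i * Var j) ^ (g - 1) \<in> ?I"
        using extract_case3_pair[OF KI _ pwI[OF ij(1)] pwI[OF ij(2)]] g3 by auto
    qed
    show ?thesis unfolding J_def
    proof (rule ideal_gen_least[OF KI], rule subsetI)
      fix p :: "'k mpoly"
      assume "p \<in> {esym r {1..n} | r. 1 \<le> r \<and> r \<le> g} \<union> {Var i ^ (g + 1) | i. i \<in> {1..n}}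
            \<union> {(Var i + Var j) * (Var i * Var j) ^ (g - 1) | i j. i \<in> {1..n} \<and> j \<in> {1..n} \<and> i \<noteq> j}
            \<union> {(Var i * Var j * Var k) ^ (g - 1) | i j k. 1 \<le> i \<and> i < j \<and> j < k \<and> k \<le> n}"
      then consider (e) r where "p = esym r {1..n}" "1 \<le> r"
        | (v) i where "p = Var i ^ (g + 1)" "i \<in> {1..n}"
        | (p) i j where "p = (Var i + Var j) * (Var i * Var j) ^ (g - 1)" "i \<in> {1..n}" "j \<in> {1..n}" "i \<noteq> j"
        | (t) i j k where "p = (Var i * Var j * Var k) ^ (g - 1)" "1 \<le> i" "i < j" "j < k" "k \<le> n"
        by blast
      then show "p \<in> ?I"
      proof cases
        case e then show ?thesis using E_DP[OF part] by simp
      next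
        case v then show ?thesis using pwI by simp
      next
        case p then show ?thesis using prI by simp
      next
        case t
        have ijk: "i \<in> {1..n}" "j \<in> {1..n}" "k \<in> {1..n}" using t by auto
        have k3: "3 \<le> u - 1" using u4 by simp
        have len3: "length [i, j, k] = 3" by simp
        have "(\<Sum>i\<in>{1..length [i, j, k]}. conj_part lam i) < (3 * g - 3) + length [i, j, k]"
          unfolding len3 l Sk_small[OF k3] using g by simp
        then have "hsym (3 * g - 3) [i, j, k] \<in> ?I"
          by (intro hsym_in_DP[OF part]) (use t g3 in auto)
        then show ?thesis using extract_triple[OF KI g3 pwI prI ijk] t by auto
      qed
    qed
  qed
  ultimately show ?thesis unfolding J_def by blast
qed

theorem mainTheorem9:
  fixes n :: nat and lam :: "nat list"
  assumes "1 \<le> n" and "is_partition n lam"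
  shows
   "(\<forall>u a c g. lam = replicate a u @ replicate c (u - 1) \<and> g = a + c \<longrightarrow>
       (DP_ideal n lam :: 'k::field_char_0 mpoly set) =
         ideal_gen ({esym r {1..n} | r. 1 \<le> r \<and> r \<le> g - 1} \<union> {Var i ^ g | i. i \<in> {1..n}}))
    \<and>
    (\<forall>u a c g. lam = replicate a u @ replicate c (u - 1) @ [1] \<and> 3 \<le> u \<and> g = a + c \<and> 1 < g \<longrightarrow>
       (DP_ideal n lam :: 'k::field_char_0 mpoly set) =
         ideal_gen ({esym r {1..n} | r. 1 \<le> r \<and> r \<le> g} \<union> {Var i ^ (g + 1) | i. i \<in> {1..n}}
            \<union> {(Var i * Var j) ^ g | i j. 1 \<le> i \<and> i < j \<and> j \<le> n}))
    \<and>
    (\<forall>u a c g. lam = replicate a u @ replicate c (u - 1) @ [1, 1] \<and> 4 \<le> u \<and> g = a + c + 1 \<and> 2 < g \<longrightarrow>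
       (DP_ideal n lam :: 'k::field_char_0 mpoly set) =
         ideal_gen ({esym r {1..n} | r. 1 \<le> r \<and> r \<le> g} \<union> {Var i ^ (g + 1) | i. i \<in> {1..n}}
            \<union> {(Var i + Var j) * (Var i * Var j) ^ (g - 1) | i j. i \<in> {1..n} \<and> j \<in> {1..n} \<and> i \<noteq> j}
            \<union> {(Var i * Var j * Var k) ^ (g - 1) | i j k. 1 \<le> i \<and> i < j \<and> j < k \<and> k \<le> n}))"
proof (intro conjI allI impI)
  fix u a c g
  assume h: "lam = replicate a u @ replicate c (u - 1) \<and> g = a + c"
  show "(DP_ideal n lam :: 'k::field_char_0 mpoly set) =
         ideal_gen ({esym r {1..n} | r. 1 \<le> r \<and> r \<le> g - 1} \<union> {Var i ^ g | i. i \<in> {1..n}})"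
    using h by (intro case1[OF assms]) auto
next
  fix u a c g
  assume h: "lam = replicate a u @ replicate c (u - 1) @ [1] \<and> 3 \<le> u \<and> g = a + c \<and> 1 < g"
  show "(DP_ideal n lam :: 'k::field_char_0 mpoly set) =
         ideal_gen ({esym r {1..n} | r. 1 \<le> r \<and> r \<le> g} \<union> {Var i ^ (g + 1) | i. i \<in> {1..n}}
            \<union> {(Var i * Var j) ^ g | i j. 1 \<le> i \<and> i < j \<and> j \<le> n})"
    using h by (intro case2[OF assms]) auto
next
  fix u a c g
  assume h: "lam = replicate a u @ replicate c (u - 1) @ [1, 1] \<and> 4 \<le> u \<and> g = a + c + 1 \<and> 2 < g"
  show "(DP_ideal n lam :: 'k::field_char_0 mpoly set) =
         ideal_gen ({esym r {1..n} | r. 1 \<le> r \<and> r \<le> g} \<union> {Var i ^ (g + 1) | i. i \<in> {1..n}}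
            \<union> {(Var i + Var j) * (Var i * Var j) ^ (g - 1) | i j. i \<in> {1..n} \<and> j \<in> {1..n} \<and> i \<noteq> j}
            \<union> {(Var i * Var j * Var k) ^ (g - 1) | i j k. 1 \<le> i \<and> i < j \<and> j < k \<and> k \<le> n})"
    using h by (intro case3[OF assms]) auto
qed

end
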